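(* There is no triharmonic Legendre curve in a $3$-dimensional $f$-Kenmotsu manifold $(M,\varphi,\xi,\eta,g)$.
   Context: An almost contact metric manifold $(M^{2n+1},\varphi,\xi,\eta,g)$ has $\varphi^2=-I+\eta\otimes\xi$, $\eta(\xi)=1$, $\varphi\xi=0$, $\eta\circ\varphi=0$, $\eta(X)=g(X,\xi)$, $g(\varphi X,\varphi Y)=g(X,Y)-\eta(X)\eta(Y)$. It is $f$-Kenmotsu if $(\nabla_X\varphi)Y=f(g(\varphi X,Y)\xi-\eta(Y)\varphi X)$ and $\nabla_X\xi=f(X-\eta(X)\xi)$ for smooth $f$ with $df\wedge\eta=0$. In dimension 3 the curvature is $R(X,Y)Z=(\frac r2+2(f^2+f'))(g(Y,Z)X-g(X,Z)Y)-(\frac r2+3(f^2+f'))(g(Y,Z)\eta(X)\xi-g(X,Z)\eta(Y)\xi-\eta(X)\eta(Z)Y+\eta(Y)\eta(Z)X)$, with $r$ the scalar curvature and $f'$ the derivative of $f$. For an arc-length parametrized Frenet curve $\gamma$ with $T=\gamma'$, $\nabla_TT=k_1N$, $\nabla_TN=-k_1T+k_2B$, $\nabla_TB=-k_2N$. A Legendre curve is a slant curve with contact angle $\theta=\pi/2$ (or $3\pi/2$), i.e. $g(T,\xi)=\eta(T)=0$ along the curve. A curve is triharmonic if $\tau_3(\gamma)=\nabla_T^5T+R(\nabla_T^3T,T)T-R(\nabla_T^2T,\nabla_TT)T=0$. *)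

theory Defs
  imports "HOL-Analysis.Analysis"
begin

text \<open>Local (coordinate) model: a 3-dimensional Riemannian manifold is an open set
U of real^3 with a smooth metric g (g p x y = metric at p applied to tangent vectors x y).
Since every curve segment lies in a chart and any open U with such g is a manifold,
non-existence of triharmonic Legendre curves is equivalently stated in this setting.\<close>

type_synonym pt = "real^3"

coinductive C_inf_on :: "'a::real_normed_vector set \<Rightarrow> ('a \<Rightarrow> real) \<Rightarrow> bool"
  for U where
  "\<lbrakk>\<forall>x\<in>U. h differentiable (at x);
    \<forall>v. C_inf_on U (\<lambda>x. frechet_derivative h (at x) v)\<rbrakk> \<Longrightarrow> C_inf_on U h"

definition vf_smooth :: "'a::real_normed_vector set \<Rightarrow> ('a \<Rightarrow> pt) \<Rightarrow> bool" where
  "vf_smooth U X \<longleftrightarrow> (\<forall>i. C_inf_on U (\<lambda>p. X p $ i))"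

definition riemannian_metric :: "pt set \<Rightarrow> (pt \<Rightarrow> pt \<Rightarrow> pt \<Rightarrow> real) \<Rightarrow> bool" where
  "riemannian_metric U g \<longleftrightarrow> open U \<and>
     (\<forall>p\<in>U. (\<forall>x y z a b. g p (a *\<^sub>R x + b *\<^sub>R y) z = a * g p x z + b * g p y z)
          \<and> (\<forall>x y. g p x y = g p y x) \<and> (\<forall>x. x \<noteq> 0 \<longrightarrow> g p x x > 0)) \<and>
     (\<forall>x y. C_inf_on U (\<lambda>p. g p x y))"

definition dg :: "(pt \<Rightarrow> pt \<Rightarrow> pt \<Rightarrow> real) \<Rightarrow> pt \<Rightarrow> pt \<Rightarrow> pt \<Rightarrow> pt \<Rightarrow> real" where
  "dg g p x y z = frechet_derivative (\<lambda>q. g q y z) (at p) x"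

text \<open>Christoffel term of the Levi-Civita connection (Koszul formula for constant fields).\<close>
definition christoffel :: "(pt \<Rightarrow> pt \<Rightarrow> pt \<Rightarrow> real) \<Rightarrow> pt \<Rightarrow> pt \<Rightarrow> pt \<Rightarrow> pt" where
  "christoffel g p x y =
     (THE w. \<forall>z. g p w z = (dg g p x y z + dg g p y x z - dg g p z x y) / 2)"

definition cov_deriv :: "(pt \<Rightarrow> pt \<Rightarrow> pt \<Rightarrow> real) \<Rightarrow> (pt \<Rightarrow> pt) \<Rightarrow> pt \<Rightarrow> pt \<Rightarrow> pt" where
  "cov_deriv g Y p x = frechet_derivative Y (at p) x + christoffel g p x (Y p)"

text \<open>Riemann curvature R(x,y)z = nabla_x nabla_y z - nabla_y nabla_x z - nabla_[x,y] z,
 computed with constant coordinate extensions (whose bracket vanishes).\<close>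
definition curvature :: "(pt \<Rightarrow> pt \<Rightarrow> pt \<Rightarrow> real) \<Rightarrow> pt \<Rightarrow> pt \<Rightarrow> pt \<Rightarrow> pt \<Rightarrow> pt" where
  "curvature g p x y z =
     cov_deriv g (\<lambda>q. christoffel g q y z) p x - cov_deriv g (\<lambda>q. christoffel g q x z) p y"

definition f_kenmotsu ::
  "pt set \<Rightarrow> (pt \<Rightarrow> pt \<Rightarrow> pt \<Rightarrow> real) \<Rightarrow> (pt \<Rightarrow> pt \<Rightarrow> pt) \<Rightarrow> (pt \<Rightarrow> pt)
     \<Rightarrow> (pt \<Rightarrow> pt \<Rightarrow> real) \<Rightarrow> (pt \<Rightarrow> real) \<Rightarrow> bool" where
  "f_kenmotsu U g \<phi> \<xi> \<eta> f \<longleftrightarrow>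
     riemannian_metric U g \<and> vf_smooth U \<xi> \<and> (\<forall>Y. vf_smooth U (\<lambda>p. \<phi> p Y)) \<and> C_inf_on U f \<and>
     (\<forall>p\<in>U.
        linear (\<phi> p) \<and>
        (\<forall>X. \<eta> p X = g p X (\<xi> p)) \<and>
        (\<forall>X. \<phi> p (\<phi> p X) = - X + \<eta> p X *\<^sub>R \<xi> p) \<and>
        \<eta> p (\<xi> p) = 1 \<and> \<phi> p (\<xi> p) = 0 \<and>
        (\<forall>X. \<eta> p (\<phi> p X) = 0) \<and>
        (\<forall>X Y. g p (\<phi> p X) (\<phi> p Y) = g p X Y - \<eta> p X * \<eta> p Y) \<and>
        (\<forall>X Y. cov_deriv g (\<lambda>q. \<phi> q Y) p X - \<phi> p (christoffel g p X Y)
               = f p *\<^sub>R (g p (\<phi> p X) Y *\<^sub>R \<xi> p - \<eta> p Y *\<^sub>R \<phi> p X)) \<and>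
        (\<forall>X. cov_deriv g \<xi> p X = f p *\<^sub>R (X - \<eta> p X *\<^sub>R \<xi> p)) \<and>
        (\<forall>X Y. frechet_derivative f (at p) X * \<eta> p Y - frechet_derivative f (at p) Y * \<eta> p X = 0))"

definition velocity :: "(real \<Rightarrow> pt) \<Rightarrow> real \<Rightarrow> pt" where
  "velocity \<gamma> s = vector_derivative \<gamma> (at s)"

definition covD :: "(pt \<Rightarrow> pt \<Rightarrow> pt \<Rightarrow> real) \<Rightarrow> (real \<Rightarrow> pt) \<Rightarrow> (real \<Rightarrow> pt) \<Rightarrow> real \<Rightarrow> pt" where
  "covD g \<gamma> V = (\<lambda>s. vector_derivative V (at s) + christoffel g (\<gamma> s) (velocity \<gamma> s) (V s))"

definition frenet_curve :: "pt set \<Rightarrow> (pt \<Rightarrow> pt \<Rightarrow> pt \<Rightarrow> real) \<Rightarrow> real set \<Rightarrow> (real \<Rightarrow> pt) \<Rightarrow> bool" where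
  "frenet_curve U g I \<gamma> \<longleftrightarrow>
     open I \<and> is_interval I \<and> I \<noteq> {} \<and> (\<forall>s\<in>I. \<gamma> s \<in> U) \<and> vf_smooth I \<gamma> \<and>
     (let T = velocity \<gamma> in
       (\<forall>s\<in>I. g (\<gamma> s) (T s) (T s) = 1) \<and>
       (\<exists>N B k1 k2. vf_smooth I N \<and> vf_smooth I B \<and>
          (\<forall>s\<in>I. g (\<gamma> s) (N s) (N s) = 1 \<and> g (\<gamma> s) (B s) (B s) = 1 \<and>
                 g (\<gamma> s) (T s) (N s) = 0 \<and> g (\<gamma> s) (T s) (B s) = 0 \<and> g (\<gamma> s) (N s) (B s) = 0 \<and>
                 k1 s > 0 \<and> k2 s > 0 \<and>
                 covD g \<gamma> T s = k1 s *\<^sub>R N s \<and>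
                 covD g \<gamma> N s = - k1 s *\<^sub>R T s + k2 s *\<^sub>R B s \<and>
                 covD g \<gamma> B s = - k2 s *\<^sub>R N s)))"

definition legendre_curve :: "(pt \<Rightarrow> pt \<Rightarrow> real) \<Rightarrow> real set \<Rightarrow> (real \<Rightarrow> pt) \<Rightarrow> bool" where
  "legendre_curve \<eta> I \<gamma> \<longleftrightarrow> (\<forall>s\<in>I. \<eta> (\<gamma> s) (velocity \<gamma> s) = 0)"

definition tau3 :: "(pt \<Rightarrow> pt \<Rightarrow> pt \<Rightarrow> real) \<Rightarrow> (real \<Rightarrow> pt) \<Rightarrow> real \<Rightarrow> pt" where
  "tau3 g \<gamma> s = (let T = velocity \<gamma>; D = covD g \<gamma> in
     (D ^^ 5) T s + curvature g (\<gamma> s) ((D ^^ 3) T s) (T s) (T s)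
                  - curvature g (\<gamma> s) ((D ^^ 2) T s) (D T s) (T s))"

definition triharmonic :: "(pt \<Rightarrow> pt \<Rightarrow> pt \<Rightarrow> real) \<Rightarrow> real set \<Rightarrow> (real \<Rightarrow> pt) \<Rightarrow> bool" where
  "triharmonic g I \<gamma> \<longleftrightarrow> (\<forall>s\<in>I. tau3 g \<gamma> s = 0)"

end

theory Submission
  imports Defs
begin

lemma vec_has_derivative_iff:
  fixes f :: "'a::real_normed_vector \<Rightarrow> real^'n"
  shows "(f has_derivative f') (at a within S) \<longleftrightarrow>
    (\<forall>i. ((\<lambda>x. f x $ i) has_derivative (\<lambda>h. f' h $ i)) (at a within S))"
  apply (subst has_derivative_componentwise_within)
  apply (auto simp: Basis_vec_def cart_eq_inner_axis[symmetric] inner_axis)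
  done

lemma lin_expand:
  fixes L :: "real^'n \<Rightarrow> real"
  assumes "linear L"
  shows "L w = (\<Sum>i\<in>UNIV. w$i * L (axis i 1))"
proof -
  have "L w = L (\<Sum>i\<in>UNIV. (w$i) *\<^sub>R axis i 1)"
    using basis_expansion[of w] by (simp add: scalar_mult_eq_scaleR)
  also have "\<dots> = (\<Sum>i\<in>UNIV. w$i * L (axis i 1))"
    using assms by (simp add: linear_sum linear_scale)
  finally show ?thesis .
qed

lemma C_inf_const: "C_inf_on S (\<lambda>x. c)"
proof -
  have "\<forall>c. C_inf_on S (\<lambda>x. c)"
  proof (intro allI)
    fix c
    show "C_inf_on S (\<lambda>x. c)"
    proof (coinduction arbitrary: c rule: C_inf_on.coinduct)
      case (C_inf_on c)
      have "frechet_derivative (\<lambda>x. c) (at x) v = 0" for x v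
        using frechet_derivative_at[OF has_derivative_const[of c "at x"]] by simp
      then show ?case by auto
    qed
  qed
  then show ?thesis by blast
qed

inductive cl :: "'a::real_normed_vector set \<Rightarrow> pt set \<Rightarrow> ('a \<Rightarrow> pt) \<Rightarrow> ('a \<Rightarrow> real) \<Rightarrow> bool"
  for S U \<gamma> where
  base: "C_inf_on S h \<Longrightarrow> cl S U \<gamma> h"
| comp: "C_inf_on U h \<Longrightarrow> cl S U \<gamma> (\<lambda>x. h (\<gamma> x))"
| const: "cl S U \<gamma> (\<lambda>x. c)"
| add: "cl S U \<gamma> u \<Longrightarrow> cl S U \<gamma> v \<Longrightarrow> cl S U \<gamma> (\<lambda>x. u x + v x)"
| mult: "cl S U \<gamma> u \<Longrightarrow> cl S U \<gamma> v \<Longrightarrow> cl S U \<gamma> (\<lambda>x. u x * v x)"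
| inv: "cl S U \<gamma> u \<Longrightarrow> (\<forall>x\<in>S. u x \<noteq> 0) \<Longrightarrow> cl S U \<gamma> (\<lambda>x. inverse (u x))"
| sum: "finite (A::3 set) \<Longrightarrow> (\<forall>i\<in>A. cl S U \<gamma> (F i)) \<Longrightarrow> cl S U \<gamma> (\<lambda>x. \<Sum>i\<in>A. F i x)"

lemma C_inf_diff: "C_inf_on S h \<Longrightarrow> x \<in> S \<Longrightarrow> (h has_derivative frechet_derivative h (at x)) (at x)"
  by (metis C_inf_on.cases frechet_derivative_works)

lemma C_inf_deriv: "C_inf_on S h \<Longrightarrow> C_inf_on S (\<lambda>x. frechet_derivative h (at x) v)"
  by (metis C_inf_on.cases)

lemma cl_deriv:
  assumes S: "open S" and U: "open U" and gU: "\<forall>x\<in>S. \<gamma> x \<in> U"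
    and gs: "\<forall>i. C_inf_on S (\<lambda>x. \<gamma> x $ i)"
    and "cl S U \<gamma> u"
  shows "(\<forall>x\<in>S. (u has_derivative frechet_derivative u (at x)) (at x)) \<and>
         (\<forall>v. \<exists>w. cl S U \<gamma> w \<and> (\<forall>x\<in>S. frechet_derivative u (at x) v = w x))"
  using assms(5)
proof (induction rule: cl.induct)
  case (base h)
  then show ?case using C_inf_diff C_inf_deriv cl.base by blast
next
  case (comp h)
  define Dg where "Dg x = (\<lambda>v. \<chi> i. frechet_derivative (\<lambda>x. \<gamma> x $ i) (at x) v)" for x
  have dg: "(\<gamma> has_derivative Dg x) (at x)" if "x \<in> S" for x
    unfolding vec_has_derivative_iff Dg_def using C_inf_diff[OF gs[rule_format] that] by simp
  have dh: "(h has_derivative frechet_derivative h (at (\<gamma> x))) (at (\<gamma> x))" if "x \<in> S" for x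
    using C_inf_diff[OF comp that[THEN gU[rule_format]]] .
  have dc: "((\<lambda>x. h (\<gamma> x)) has_derivative (\<lambda>v. frechet_derivative h (at (\<gamma> x)) (Dg x v))) (at x)"
    if "x \<in> S" for x
    using diff_chain_at[OF dg[OF that] dh[OF that]] by (simp add: o_def)
  have fd: "frechet_derivative (\<lambda>x. h (\<gamma> x)) (at x) = (\<lambda>v. frechet_derivative h (at (\<gamma> x)) (Dg x v))"
    if "x \<in> S" for x using frechet_derivative_at[OF dc[OF that]] by simp
  show ?case
  proof (intro conjI ballI allI)
    fix x assume "x \<in> S" then show "((\<lambda>x. h (\<gamma> x)) has_derivative frechet_derivative (\<lambda>x. h (\<gamma> x)) (at x)) (at x)"
      using dc fd by simp
  next
    fix v
    let ?w = "\<lambda>x. \<Sum>i\<in>UNIV. frechet_derivative (\<lambda>x. \<gamma> x $ i) (at x) v * frechet_derivative h (at (\<gamma> x)) (axis i 1)"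
    have "cl S U \<gamma> ?w"
      apply (rule cl.sum, simp, intro ballI cl.mult)
       apply (rule cl.base, rule C_inf_deriv[OF gs[rule_format]])
      apply (rule cl.comp[OF C_inf_deriv[OF comp]])
      done
    moreover have "\<forall>x\<in>S. frechet_derivative (\<lambda>x. h (\<gamma> x)) (at x) v = ?w x"
    proof
      fix x assume x: "x \<in> S"
      have lin: "linear (frechet_derivative h (at (\<gamma> x)))"
        using dh[OF x] has_derivative_linear by blast
      show "frechet_derivative (\<lambda>x. h (\<gamma> x)) (at x) v = ?w x"
        unfolding fd[OF x] lin_expand[OF lin, of "Dg x v"] by (simp add: Dg_def)
    qed
    ultimately show "\<exists>w. cl S U \<gamma> w \<and> (\<forall>x\<in>S. frechet_derivative (\<lambda>x. h (\<gamma> x)) (at x) v = w x)"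
      by blast
  qed
next
  case (const c)
  have "frechet_derivative (\<lambda>x. c) (at x) = (\<lambda>v. 0)" for x
    using frechet_derivative_at[OF has_derivative_const[of c "at x"]] by simp
  then show ?case using cl.const[of S U \<gamma> 0] by auto
next
  case (add u v)
  have d: "((\<lambda>x. u x + v x) has_derivative (\<lambda>h. frechet_derivative u (at x) h + frechet_derivative v (at x) h)) (at x)"
    if "x \<in> S" for x using add that by (intro has_derivative_add) auto
  have fd: "frechet_derivative (\<lambda>x. u x + v x) (at x) = (\<lambda>h. frechet_derivative u (at x) h + frechet_derivative v (at x) h)"
    if "x \<in> S" for x using frechet_derivative_at[OF d[OF that]] by simp
  show ?case
  proof (intro conjI ballI allI)
    fix x assume "x \<in> S" then show "((\<lambda>x. u x + v x) has_derivative frechet_derivative (\<lambda>x. u x + v x) (at x)) (at x)"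
      using d fd by simp
  next
    fix h
    obtain w1 w2 where "cl S U \<gamma> w1" "\<forall>x\<in>S. frechet_derivative u (at x) h = w1 x"
      "cl S U \<gamma> w2" "\<forall>x\<in>S. frechet_derivative v (at x) h = w2 x" using add by blast
    then show "\<exists>w. cl S U \<gamma> w \<and> (\<forall>x\<in>S. frechet_derivative (\<lambda>x. u x + v x) (at x) h = w x)"
      using fd by (intro exI[of _ "\<lambda>x. w1 x + w2 x"]) (auto intro: cl.add)
  qed
next
  case (mult u v)
  have d: "((\<lambda>x. u x * v x) has_derivative (\<lambda>h. u x * frechet_derivative v (at x) h + frechet_derivative u (at x) h * v x)) (at x)"
    if "x \<in> S" for x using mult that by (intro has_derivative_mult) auto
  have fd: "frechet_derivative (\<lambda>x. u x * v x) (at x) = (\<lambda>h. u x * frechet_derivative v (at x) h + frechet_derivative u (at x) h * v x)"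
    if "x \<in> S" for x using frechet_derivative_at[OF d[OF that]] by simp
  show ?case
  proof (intro conjI ballI allI)
    fix x assume "x \<in> S" then show "((\<lambda>x. u x * v x) has_derivative frechet_derivative (\<lambda>x. u x * v x) (at x)) (at x)"
      using d fd by simp
  next
    fix h
    obtain w1 w2 where "cl S U \<gamma> w1" "\<forall>x\<in>S. frechet_derivative u (at x) h = w1 x"
      "cl S U \<gamma> w2" "\<forall>x\<in>S. frechet_derivative v (at x) h = w2 x" using mult by blast
    then show "\<exists>w. cl S U \<gamma> w \<and> (\<forall>x\<in>S. frechet_derivative (\<lambda>x. u x * v x) (at x) h = w x)"
      using fd mult by (intro exI[of _ "\<lambda>x. u x * w2 x + w1 x * v x"]) (auto intro: cl.add cl.mult)
  qed
next
  case (inv u)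
  have d: "((\<lambda>x. inverse (u x)) has_derivative (\<lambda>h. - (inverse (u x) * frechet_derivative u (at x) h * inverse (u x)))) (at x)"
    if "x \<in> S" for x using inv that by (intro Deriv.has_derivative_inverse) auto
  have fd: "frechet_derivative (\<lambda>x. inverse (u x)) (at x) = (\<lambda>h. - (inverse (u x) * frechet_derivative u (at x) h * inverse (u x)))"
    if "x \<in> S" for x using frechet_derivative_at[OF d[OF that]] by simp
  show ?case
  proof (intro conjI ballI allI)
    fix x assume "x \<in> S" then show "((\<lambda>x. inverse (u x)) has_derivative frechet_derivative (\<lambda>x. inverse (u x)) (at x)) (at x)"
      using d fd by simp
  next
    fix h
    obtain w1 where w1: "cl S U \<gamma> w1" "\<forall>x\<in>S. frechet_derivative u (at x) h = w1 x" using inv by blast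
    have "cl S U \<gamma> (\<lambda>x. (-1) * (inverse (u x) * w1 x * inverse (u x)))"
      using w1 inv by (intro cl.mult cl.const cl.inv) auto
    then show "\<exists>w. cl S U \<gamma> w \<and> (\<forall>x\<in>S. frechet_derivative (\<lambda>x. inverse (u x)) (at x) h = w x)"
      using fd w1 by (intro exI[of _ "\<lambda>x. (-1) * (inverse (u x) * w1 x * inverse (u x))"]) auto
  qed
next
  case (sum A F)
  have d: "((\<lambda>x. \<Sum>i\<in>A. F i x) has_derivative (\<lambda>h. \<Sum>i\<in>A. frechet_derivative (F i) (at x) h)) (at x)"
    if "x \<in> S" for x using sum that by (intro has_derivative_sum) auto
  have fd: "frechet_derivative (\<lambda>x. \<Sum>i\<in>A. F i x) (at x) = (\<lambda>h. \<Sum>i\<in>A. frechet_derivative (F i) (at x) h)"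
    if "x \<in> S" for x using frechet_derivative_at[OF d[OF that]] by simp
  show ?case
  proof (intro conjI ballI allI)
    fix x assume "x \<in> S" then show "((\<lambda>x. \<Sum>i\<in>A. F i x) has_derivative frechet_derivative (\<lambda>x. \<Sum>i\<in>A. F i x) (at x)) (at x)"
      using d fd by simp
  next
    fix h
    have "\<forall>i\<in>A. \<exists>w. cl S U \<gamma> w \<and> (\<forall>x\<in>S. frechet_derivative (F i) (at x) h = w x)" using sum by blast
    then obtain W where W: "\<forall>i\<in>A. cl S U \<gamma> (W i) \<and> (\<forall>x\<in>S. frechet_derivative (F i) (at x) h = W i x)"
      by metis
    then show "\<exists>w. cl S U \<gamma> w \<and> (\<forall>x\<in>S. frechet_derivative (\<lambda>x. \<Sum>i\<in>A. F i x) (at x) h = w x)"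
      using fd sum by (intro exI[of _ "\<lambda>x. \<Sum>i\<in>A. W i x"]) (auto intro!: cl.sum)
  qed
qed

lemma cl_C_inf':
  assumes S: "open S" and U: "open U" and gU: "\<forall>x\<in>S. \<gamma> x \<in> U"
    and gs: "\<forall>i. C_inf_on S (\<lambda>x. \<gamma> x $ i)"
    and "cl S U \<gamma> u0" "\<forall>x\<in>S. u x = u0 x"
  shows "C_inf_on S u"
proof -
  have "\<exists>u'. cl S U \<gamma> u' \<and> (\<forall>x\<in>S. u x = u' x)" using assms(5,6) by blast
  then show ?thesis
  proof (coinduction arbitrary: u rule: C_inf_on.coinduct)
    case (C_inf_on u)
    then obtain u' where u': "cl S U \<gamma> u'" "\<forall>x\<in>S. u x = u' x" by blast
    note D = cl_deriv[OF S U gU gs u'(1)]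
    have du: "(u has_derivative frechet_derivative u' (at x)) (at x)" if "x \<in> S" for x
      using has_derivative_transform_within_open[OF D[THEN conjunct1, rule_format, OF that] S that] u'(2)
      by auto
    have fd: "frechet_derivative u (at x) = frechet_derivative u' (at x)" if "x \<in> S" for x
      using frechet_derivative_at[OF du[OF that]] by simp
    have c1: "\<forall>x\<in>S. u differentiable at x" using du differentiableI by blast
    have c2: "\<exists>u'a. cl S U \<gamma> u'a \<and> (\<forall>x\<in>S. frechet_derivative u (at x) v = u'a x)" for v
    proof -
      obtain w where "cl S U \<gamma> w" "\<forall>x\<in>S. frechet_derivative u' (at x) v = w x" using D by blast
      then show ?thesis using fd by auto
    qed
    show ?case using c1 c2 by blast
  qed
qed

lemma cl_C_inf:
  assumes S: "open S" and U: "open U" and gU: "\<forall>x\<in>S. \<gamma> x \<in> U"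
    and gs: "\<forall>i. C_inf_on S (\<lambda>x. \<gamma> x $ i)"
    and "cl S U \<gamma> u"
  shows "C_inf_on S u"
  using cl_C_inf'[OF assms] by simp

lemma line_mvt:
  fixes \<phi> :: "'a::real_normed_vector \<Rightarrow> real"
  assumes r: "0 < r"
    and d: "\<forall>t\<in>{0..r}. (\<phi> has_derivative D (a + t *\<^sub>R v)) (at (a + t *\<^sub>R v))"
  shows "\<exists>t. 0 < t \<and> t < r \<and> \<phi> (a + r *\<^sub>R v) - \<phi> a = r * D (a + t *\<^sub>R v) v"
proof -
  have "\<forall>t. 0 \<le> t \<and> t \<le> r \<longrightarrow> DERIV (\<lambda>t. \<phi> (a + t *\<^sub>R v)) t :> D (a + t *\<^sub>R v) v"
  proof (intro allI impI)
    fix t assume t: "0 \<le> t \<and> t \<le> r"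
    have l: "((\<lambda>t. a + t *\<^sub>R v) has_derivative (\<lambda>h. h *\<^sub>R v)) (at t)"
      by (auto intro!: derivative_eq_intros)
    have dd: "(\<phi> has_derivative D (a + t *\<^sub>R v)) (at (a + t *\<^sub>R v))" using d t by auto
    have lin: "linear (D (a + t *\<^sub>R v))" using dd has_derivative_linear by blast
    have "((\<lambda>t. \<phi> (a + t *\<^sub>R v)) has_derivative (\<lambda>h. D (a + t *\<^sub>R v) (h *\<^sub>R v))) (at t)"
      using diff_chain_at[OF l dd] by (simp add: o_def)
    moreover have "(\<lambda>h. D (a + t *\<^sub>R v) (h *\<^sub>R v)) = (\<lambda>h. h * D (a + t *\<^sub>R v) v)"
      using lin by (simp add: linear_scale)
    ultimately show "DERIV (\<lambda>t. \<phi> (a + t *\<^sub>R v)) t :> D (a + t *\<^sub>R v) v"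
      by (simp add: has_field_derivative_def mult.commute[of _ "D (a + t *\<^sub>R v) v"])
  qed
  from MVT2[OF r, of "\<lambda>t. \<phi> (a + t *\<^sub>R v)" "\<lambda>t. D (a + t *\<^sub>R v) v"] this obtain z where "0 < z" "z < r"
    "\<phi> (a + r *\<^sub>R v) - \<phi> (a + 0 *\<^sub>R v) = (r - 0) * D (a + z *\<^sub>R v) v" by blast
  then show ?thesis by auto
qed

lemma C_inf_cont: "C_inf_on S h \<Longrightarrow> x \<in> S \<Longrightarrow> isCont h x"
  using C_inf_diff has_derivative_continuous by blast

lemma schwarz:
  fixes h :: "'a::real_normed_vector \<Rightarrow> real"
  assumes U: "open U" and h: "C_inf_on U h" and p: "p \<in> U"
  shows "frechet_derivative (\<lambda>q. frechet_derivative h (at q) y) (at p) x =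
         frechet_derivative (\<lambda>q. frechet_derivative h (at q) x) (at p) y"
proof (rule ccontr)
  define hx where "hx = (\<lambda>q. frechet_derivative h (at q) x)"
  define hy where "hy = (\<lambda>q. frechet_derivative h (at q) y)"
  define F1 where "F1 = (\<lambda>q. frechet_derivative hy (at q) x)"
  define F2 where "F2 = (\<lambda>q. frechet_derivative hx (at q) y)"
  have hxC: "C_inf_on U hx" and hyC: "C_inf_on U hy" unfolding hx_def hy_def using C_inf_deriv[OF h] by auto
  have F1C: "C_inf_on U F1" and F2C: "C_inf_on U F2" unfolding F1_def F2_def
    using C_inf_deriv[OF hxC] C_inf_deriv[OF hyC] by auto
  assume ne: "\<not> ?thesis"
  then have ne': "F1 p \<noteq> F2 p" unfolding F1_def F2_def hx_def hy_def by simp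
  define e where "e = \<bar>F1 p - F2 p\<bar> / 2"
  have e: "e > 0" using ne' unfolding e_def by simp
  obtain d0 where d0: "d0 > 0" "ball p d0 \<subseteq> U" using U p open_contains_ball by blast
  obtain d1 where d1: "d1 > 0" "\<forall>q. dist q p < d1 \<longrightarrow> dist (F1 q) (F1 p) < e"
    using C_inf_cont[OF F1C p] e unfolding continuous_at_eps_delta by blast
  obtain d2 where d2: "d2 > 0" "\<forall>q. dist q p < d2 \<longrightarrow> dist (F2 q) (F2 p) < e"
    using C_inf_cont[OF F2C p] e unfolding continuous_at_eps_delta by blast
  define d where "d = min d0 (min d1 d2)"
  have d: "d > 0" using d0 d1 d2 unfolding d_def by simp
  define r where "r = d / (2 * (norm x + norm y + 1))"
  have nxy: "0 < 2 * (norm x + norm y + 1)"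
  proof -
    have "0 \<le> norm x" "0 \<le> norm y" by auto
    then show ?thesis by smt
  qed
  have r: "r > 0" unfolding r_def using d nxy by simp
  have rb: "r * (norm x + norm y) < d"
  proof -
    have "r * (norm x + norm y) < r * (2 * (norm x + norm y + 1))"
      using r norm_ge_zero[of x] norm_ge_zero[of y] by (intro mult_strict_left_mono) smt+
    also have "\<dots> = d" unfolding r_def using nxy by simp
    finally show ?thesis .
  qed
  have inb: "dist (p + s *\<^sub>R x + t *\<^sub>R y) p < d" if "0 \<le> s" "s \<le> r" "0 \<le> t" "t \<le> r" for s t
  proof -
    have "dist (p + s *\<^sub>R x + t *\<^sub>R y) p = norm (s *\<^sub>R x + t *\<^sub>R y)" by (simp add: dist_norm)
    also have "\<dots> \<le> s * norm x + t * norm y"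
      using norm_triangle_ineq[of "s *\<^sub>R x" "t *\<^sub>R y"] that by simp
    also have "\<dots> \<le> r * norm x + r * norm y"
      using that by (intro add_mono mult_right_mono) auto
    finally show ?thesis using rb by (simp add: algebra_simps)
  qed
  have inU: "p + s *\<^sub>R x + t *\<^sub>R y \<in> U" if "0 \<le> s" "s \<le> r" "0 \<le> t" "t \<le> r" for s t
    using inb[OF that] d0 unfolding d_def by (auto simp: dist_commute)
  have dh: "(h has_derivative frechet_derivative h (at q)) (at q)" if "q \<in> U" for q
    using C_inf_diff[OF h that] .
  have dhx: "(hx has_derivative frechet_derivative hx (at q)) (at q)" if "q \<in> U" for q
    using C_inf_diff[OF hxC that] .
  have dhy: "(hy has_derivative frechet_derivative hy (at q)) (at q)" if "q \<in> U" for q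
    using C_inf_diff[OF hyC that] .
  define \<Delta> where "\<Delta> = h (p + r *\<^sub>R x + r *\<^sub>R y) - h (p + r *\<^sub>R x) - h (p + r *\<^sub>R y) + h p"
  have "\<exists>s. 0 < s \<and> s < r \<and> (\<lambda>q. h (q + r *\<^sub>R y) - h q) (p + r *\<^sub>R x) - (\<lambda>q. h (q + r *\<^sub>R y) - h q) p
      = r * (\<lambda>q v. frechet_derivative h (at (q + r *\<^sub>R y)) v - frechet_derivative h (at q) v) (p + s *\<^sub>R x) x"
  proof (rule line_mvt[OF r], intro ballI)
    fix t assume t: "t \<in> {0..r}"
    have a: "p + t *\<^sub>R x + r *\<^sub>R y \<in> U" using inU[of t r] t r by auto
    have b: "p + t *\<^sub>R x \<in> U" using inU[of t 0] t r by auto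
    have "((\<lambda>q. q + r *\<^sub>R y) has_derivative (\<lambda>v. v)) (at (p + t *\<^sub>R x))"
      by (auto intro!: derivative_eq_intros)
    from diff_chain_at[OF this dh[OF a]]
    have "((\<lambda>q. h (q + r *\<^sub>R y)) has_derivative frechet_derivative h (at (p + t *\<^sub>R x + r *\<^sub>R y))) (at (p + t *\<^sub>R x))"
      by (simp add: o_def)
    then show "((\<lambda>q. h (q + r *\<^sub>R y) - h q) has_derivative
      (\<lambda>v. frechet_derivative h (at (p + t *\<^sub>R x + r *\<^sub>R y)) v - frechet_derivative h (at (p + t *\<^sub>R x)) v))
      (at (p + t *\<^sub>R x))"
      by (intro has_derivative_diff dh[OF b])
  qed
  then obtain s1 where s1: "0 < s1" "s1 < r" "\<Delta> = r * (hx (p + s1 *\<^sub>R x + r *\<^sub>R y) - hx (p + s1 *\<^sub>R x))"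
    unfolding \<Delta>_def hx_def by (auto simp: algebra_simps)
  have "\<exists>t. 0 < t \<and> t < r \<and> hx ((p + s1 *\<^sub>R x) + r *\<^sub>R y) - hx (p + s1 *\<^sub>R x)
      = r * frechet_derivative hx (at ((p + s1 *\<^sub>R x) + t *\<^sub>R y)) y"
    using s1 by (intro line_mvt[OF r] ballI dhx inU) auto
  then obtain t1 where t1: "0 < t1" "t1 < r" "hx (p + s1 *\<^sub>R x + r *\<^sub>R y) - hx (p + s1 *\<^sub>R x) = r * F2 (p + s1 *\<^sub>R x + t1 *\<^sub>R y)"
    unfolding F2_def by auto
  have "\<exists>s. 0 < s \<and> s < r \<and> (\<lambda>q. h (q + r *\<^sub>R x) - h q) (p + r *\<^sub>R y) - (\<lambda>q. h (q + r *\<^sub>R x) - h q) p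
      = r * (\<lambda>q v. frechet_derivative h (at (q + r *\<^sub>R x)) v - frechet_derivative h (at q) v) (p + s *\<^sub>R y) y"
  proof (rule line_mvt[OF r], intro ballI)
    fix t assume t: "t \<in> {0..r}"
    have a: "p + t *\<^sub>R y + r *\<^sub>R x \<in> U" using inU[of r t] t r by (auto simp: algebra_simps)
    have b: "p + t *\<^sub>R y \<in> U" using inU[of 0 t] t r by auto
    have "((\<lambda>q. q + r *\<^sub>R x) has_derivative (\<lambda>v. v)) (at (p + t *\<^sub>R y))"
      by (auto intro!: derivative_eq_intros)
    from diff_chain_at[OF this dh[OF a]]
    have "((\<lambda>q. h (q + r *\<^sub>R x)) has_derivative frechet_derivative h (at (p + t *\<^sub>R y + r *\<^sub>R x))) (at (p + t *\<^sub>R y))"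
      by (simp add: o_def)
    then show "((\<lambda>q. h (q + r *\<^sub>R x) - h q) has_derivative
      (\<lambda>v. frechet_derivative h (at (p + t *\<^sub>R y + r *\<^sub>R x)) v - frechet_derivative h (at (p + t *\<^sub>R y)) v))
      (at (p + t *\<^sub>R y))"
      by (intro has_derivative_diff dh[OF b])
  qed
  then obtain s2 where s2: "0 < s2" "s2 < r" "\<Delta> = r * (hy (p + s2 *\<^sub>R y + r *\<^sub>R x) - hy (p + s2 *\<^sub>R y))"
    unfolding \<Delta>_def hy_def by (auto simp: algebra_simps)
  have "\<exists>t. 0 < t \<and> t < r \<and> hy ((p + s2 *\<^sub>R y) + r *\<^sub>R x) - hy (p + s2 *\<^sub>R y)
      = r * frechet_derivative hy (at ((p + s2 *\<^sub>R y) + t *\<^sub>R x)) x"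
  proof (intro line_mvt[OF r] ballI dhy)
    fix t assume "t \<in> {0..r}"
    then show "p + s2 *\<^sub>R y + t *\<^sub>R x \<in> U" using inU[of t s2] s2 by (auto simp: algebra_simps)
  qed
  then obtain t2 where t2: "0 < t2" "t2 < r" "hy (p + s2 *\<^sub>R y + r *\<^sub>R x) - hy (p + s2 *\<^sub>R y) = r * F1 (p + t2 *\<^sub>R x + s2 *\<^sub>R y)"
    unfolding F1_def by (auto simp: algebra_simps)
  have eq: "F2 (p + s1 *\<^sub>R x + t1 *\<^sub>R y) = F1 (p + t2 *\<^sub>R x + s2 *\<^sub>R y)"
    using s1(3) t1(3) s2(3) t2(3) r by simp
  have q1: "dist (p + s1 *\<^sub>R x + t1 *\<^sub>R y) p < d" using inb s1 t1 by simp
  have q2: "dist (p + t2 *\<^sub>R x + s2 *\<^sub>R y) p < d" using inb s2 t2 by simp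
  have "dist (F2 (p + s1 *\<^sub>R x + t1 *\<^sub>R y)) (F2 p) < e" using d2 q1 unfolding d_def by simp
  moreover have "dist (F1 (p + t2 *\<^sub>R x + s2 *\<^sub>R y)) (F1 p) < e" using d1 q2 unfolding d_def by simp
  ultimately have "\<bar>F1 p - F2 p\<bar> < 2 * e" using eq by (simp add: dist_real_def)
  then show False unfolding e_def by simp
qed

locale rm =
  fixes U :: "pt set" and g :: "pt \<Rightarrow> pt \<Rightarrow> pt \<Rightarrow> real"
  assumes RM: "riemannian_metric U g"
begin

lemma U_open: "open U" using RM unfolding riemannian_metric_def by blast
lemma g_lin: "p \<in> U \<Longrightarrow> g p (a *\<^sub>R x + b *\<^sub>R y) z = a * g p x z + b * g p y z"
  using RM unfolding riemannian_metric_def by blast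
lemma g_sym: "p \<in> U \<Longrightarrow> g p x y = g p y x"
  using RM unfolding riemannian_metric_def by blast
lemma g_pos: "p \<in> U \<Longrightarrow> x \<noteq> 0 \<Longrightarrow> g p x x > 0"
  using RM unfolding riemannian_metric_def by blast
lemma g_C: "C_inf_on U (\<lambda>p. g p x y)"
  using RM unfolding riemannian_metric_def by blast

lemma g_linear1: "p \<in> U \<Longrightarrow> linear (\<lambda>x. g p x z)"
proof (rule linearI)
  fix x y assume "p \<in> U"
  then show "g p (x + y) z = g p x z + g p y z" using g_lin[of p 1 x 1 y z] by simp
next
  fix c x assume "p \<in> U"
  then show "g p (c *\<^sub>R x) z = c *\<^sub>R g p x z" using g_lin[of p c x 0 x z] by simp
qed

lemma g_linear2: "p \<in> U \<Longrightarrow> linear (\<lambda>z. g p x z)"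
proof -
  assume p: "p \<in> U"
  have "(\<lambda>z. g p x z) = (\<lambda>z. g p z x)" by (rule ext) (rule g_sym[OF p])
  then show ?thesis using g_linear1[OF p, of x] by simp
qed

lemma g_add1: "p \<in> U \<Longrightarrow> g p (x + y) z = g p x z + g p y z"
  using linear_add[OF g_linear1[of p z], of x y] by simp
lemma g_add2: "p \<in> U \<Longrightarrow> g p z (x + y) = g p z x + g p z y"
  using linear_add[OF g_linear2[of p z], of x y] by simp
lemma g_scale1: "p \<in> U \<Longrightarrow> g p (c *\<^sub>R x) z = c * g p x z"
  using linear_scale[OF g_linear1[of p z], of c x] by simp
lemma g_scale2: "p \<in> U \<Longrightarrow> g p z (c *\<^sub>R x) = c * g p z x"
  using linear_scale[OF g_linear2[of p z], of c x] by simp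
lemma g_diff1: "p \<in> U \<Longrightarrow> g p (x - y) z = g p x z - g p y z"
  using linear_diff[OF g_linear1[of p z], of x y] by simp
lemma g_diff2: "p \<in> U \<Longrightarrow> g p z (x - y) = g p z x - g p z y"
  using linear_diff[OF g_linear2[of p z], of x y] by simp
lemma g_neg1: "p \<in> U \<Longrightarrow> g p (- x) z = - g p x z"
  using linear_neg[OF g_linear1[of p z], of x] by simp
lemma g_neg2: "p \<in> U \<Longrightarrow> g p z (- x) = - g p z x"
  using linear_neg[OF g_linear2[of p z], of x] by simp
lemma g_zero1: "p \<in> U \<Longrightarrow> g p 0 z = 0"
  using linear_0[OF g_linear1[of p z]] by simp
lemma g_zero2: "p \<in> U \<Longrightarrow> g p z 0 = 0"
  using linear_0[OF g_linear2[of p z]] by simp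
lemmas g_simps = g_add1 g_add2 g_scale1 g_scale2 g_diff1 g_diff2 g_neg1 g_neg2 g_zero1 g_zero2

lemma g_expand: "p \<in> U \<Longrightarrow> g p v w = (\<Sum>i\<in>UNIV. \<Sum>j\<in>UNIV. v$i * w$j * g p (axis i 1) (axis j 1))"
proof -
  assume p: "p \<in> U"
  have "g p v w = (\<Sum>i\<in>UNIV. v$i * g p (axis i 1) w)"
    using lin_expand[OF g_linear1[OF p, of w]] .
  also have "\<dots> = (\<Sum>i\<in>UNIV. v$i * (\<Sum>j\<in>UNIV. w$j * g p (axis i 1) (axis j 1)))"
  proof (rule sum.cong[OF refl])
    fix i show "v$i * g p (axis i 1) w = v$i * (\<Sum>j\<in>UNIV. w$j * g p (axis i 1) (axis j 1))"
      using lin_expand[OF g_linear2[OF p, of "axis i 1"], of w] by simp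
  qed
  also have "\<dots> = (\<Sum>i\<in>UNIV. \<Sum>j\<in>UNIV. v$i * w$j * g p (axis i 1) (axis j 1))"
    by (simp add: sum_distrib_left mult.assoc)
  finally show ?thesis .
qed

lemma g_hasd: "p \<in> U \<Longrightarrow> ((\<lambda>q. g q v w) has_derivative (\<lambda>x. dg g p x v w)) (at p)"
  unfolding dg_def using C_inf_diff[OF g_C] by blast

lemma dg_linear: "p \<in> U \<Longrightarrow> linear (\<lambda>x. dg g p x v w)"
  using g_hasd has_derivative_linear by blast

lemma dg_expand: "p \<in> U \<Longrightarrow> dg g p x v w = (\<Sum>i\<in>UNIV. \<Sum>j\<in>UNIV. v$i * w$j * dg g p x (axis i 1) (axis j 1))"
proof -
  assume p: "p \<in> U"
  have "((\<lambda>q. \<Sum>i\<in>UNIV. \<Sum>j\<in>UNIV. v$i * w$j * g q (axis i 1) (axis j 1)) has_derivative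
        (\<lambda>x. \<Sum>i\<in>UNIV. \<Sum>j\<in>UNIV. v$i * w$j * dg g p x (axis i 1) (axis j 1))) (at p)"
    by (intro has_derivative_sum has_derivative_mult_right g_hasd[OF p])
  then have "((\<lambda>q. g q v w) has_derivative
        (\<lambda>x. \<Sum>i\<in>UNIV. \<Sum>j\<in>UNIV. v$i * w$j * dg g p x (axis i 1) (axis j 1))) (at p)"
    by (rule has_derivative_transform_within_open[OF _ U_open p]) (rule g_expand[symmetric])
  from has_derivative_unique[OF g_hasd[OF p] this] show ?thesis by (drule_tac fun_cong[of _ _ x]) simp
qed

lemma dg_sym: "p \<in> U \<Longrightarrow> dg g p x v w = dg g p x w v"
proof -
  assume p: "p \<in> U"
  have "((\<lambda>q. g q v w) has_derivative (\<lambda>x. dg g p x w v)) (at p)"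
    by (rule has_derivative_transform_within_open[OF g_hasd[OF p] U_open p]) (rule g_sym)
  from has_derivative_unique[OF g_hasd[OF p] this] show ?thesis by (drule_tac fun_cong[of _ _ x]) simp
qed

lemma dg_linear2: "p \<in> U \<Longrightarrow> linear (\<lambda>v. dg g p x v w)"
proof -
  assume p: "p \<in> U"
  show ?thesis
    unfolding dg_expand[OF p, of x _ w]
    by (rule linearI) (simp_all add: distrib_right sum.distrib sum_distrib_left mult.assoc)
qed

lemma dg_linear3: "p \<in> U \<Longrightarrow> linear (\<lambda>w. dg g p x v w)"
proof -
  assume p: "p \<in> U"
  have "(\<lambda>w. dg g p x v w) = (\<lambda>w. dg g p x w v)" using dg_sym[OF p] by auto
  then show ?thesis using dg_linear2[OF p, of x v] by simp
qed

end

lemma cl_neg: "cl S U \<gamma> u \<Longrightarrow> cl S U \<gamma> (\<lambda>x. - u x)"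
  using cl.mult[OF cl.const[of S U \<gamma> "-1"]] by simp
lemma cl_diff: "cl S U \<gamma> u \<Longrightarrow> cl S U \<gamma> v \<Longrightarrow> cl S U \<gamma> (\<lambda>x. u x - v x)"
proof -
  assume a: "cl S U \<gamma> u" "cl S U \<gamma> v"
  have "(\<lambda>x. u x - v x) = (\<lambda>x. u x + - v x)" by simp
  then show ?thesis using cl.add[OF a(1) cl_neg[OF a(2)]] by simp
qed
lemma cl_divide: "cl S U \<gamma> u \<Longrightarrow> cl S U \<gamma> v \<Longrightarrow> (\<forall>x\<in>S. v x \<noteq> 0) \<Longrightarrow> cl S U \<gamma> (\<lambda>x. u x / v x)"
proof -
  assume a: "cl S U \<gamma> u" "cl S U \<gamma> v" "\<forall>x\<in>S. v x \<noteq> 0"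
  have "(\<lambda>x. u x / v x) = (\<lambda>x. u x * inverse (v x))" by (simp add: divide_inverse)
  then show ?thesis using cl.mult[OF a(1) cl.inv[OF a(2,3)]] by simp
qed

lemma C_of_cl:
  assumes "open S" "cl S UNIV (\<lambda>_. 0) u" shows "C_inf_on S u"
  using cl_C_inf[OF assms(1) open_UNIV _ _ assms(2)] C_inf_const[of S 0] by simp

lemma C_of_cl':
  assumes "open S" "cl S UNIV (\<lambda>_. 0) u" "\<forall>x\<in>S. u' x = u x" shows "C_inf_on S u'"
  using cl_C_inf'[OF assms(1) open_UNIV _ _ assms(2,3)] C_inf_const[of S 0] by simp

lemma C_transfer:
  assumes "open S" "C_inf_on S u" "\<forall>x\<in>S. u' x = u x" shows "C_inf_on S u'"
  using C_of_cl'[OF assms(1) cl.base[OF assms(2)] assms(3)] .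

definition adj3 :: "(3 \<Rightarrow> 3 \<Rightarrow> real) \<Rightarrow> 3 \<Rightarrow> 3 \<Rightarrow> real" where
  "adj3 m i j = m (j+1) (i+1) * m (j+2) (i+2) - m (j+1) (i+2) * m (j+2) (i+1)"
definition det3 :: "(3 \<Rightarrow> 3 \<Rightarrow> real) \<Rightarrow> real" where
  "det3 m = (\<Sum>i\<in>UNIV. m 1 i * adj3 m i 1)"
lemma three_num: "(4::3) = 1" "(5::3) = 2"
  by simp_all
lemma three_arith: "(1::3) + 1 = 2" "(1::3)+2 = 3" "(2::3)+1 = 3" "(2::3)+2 = 1" "(3::3)+1 = 1" "(3::3)+2 = 2"
  by (simp_all add: three_num)
lemma adj3_prop: "(\<Sum>i\<in>UNIV. m j i * adj3 m i l) = (if j = l then det3 m else 0)"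
  using exhaust_3[of j] exhaust_3[of l]
  unfolding adj3_def det3_def sum_3
  by (auto simp: algebra_simps three_arith three_num)

lemma det3_det: "det3 m = det (\<chi> i j. m j i)"
  unfolding det3_def adj3_def sum_3 det_3 by (simp add: algebra_simps three_arith three_num)

lemma cramer3:
  assumes "det3 m \<noteq> 0"
  shows "(\<Sum>i\<in>UNIV. m j i * ((\<Sum>l\<in>UNIV. adj3 m i l * k l) / det3 m)) = k j"
proof -
  have "(\<Sum>i\<in>UNIV. m j i * ((\<Sum>l\<in>UNIV. adj3 m i l * k l) / det3 m))
      = (\<Sum>i\<in>UNIV. \<Sum>l\<in>UNIV. m j i * adj3 m i l * k l) / det3 m"
    by (simp add: sum_divide_distrib sum_distrib_left mult.assoc)
  also have "\<dots> = (\<Sum>l\<in>UNIV. \<Sum>i\<in>UNIV. m j i * adj3 m i l * k l) / det3 m"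
    by (subst sum.swap) (rule refl)
  also have "\<dots> = (\<Sum>l\<in>UNIV. (\<Sum>i\<in>UNIV. m j i * adj3 m i l) * k l) / det3 m"
    by (simp add: sum_distrib_right)
  also have "\<dots> = (\<Sum>l\<in>UNIV. (if j = l then det3 m else 0) * k l) / det3 m"
    by (simp add: adj3_prop)
  also have "\<dots> = (\<Sum>l\<in>UNIV. (if j = l then det3 m * k l else 0)) / det3 m"
    by (intro arg_cong[where f="\<lambda>t. t / det3 m"] sum.cong) auto
  also have "\<dots> = k j" using assms by simp
  finally show ?thesis .
qed

context rm begin

definition Kc :: "pt \<Rightarrow> pt \<Rightarrow> pt \<Rightarrow> pt \<Rightarrow> real" where
  "Kc p x y z = (dg g p x y z + dg g p y x z - dg g p z x y) / 2"

abbreviation M :: "pt \<Rightarrow> 3 \<Rightarrow> 3 \<Rightarrow> real" where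
  "M p i j \<equiv> g p (axis i 1) (axis j 1)"

definition Gam :: "pt \<Rightarrow> pt \<Rightarrow> pt \<Rightarrow> pt" where
  "Gam p x y = (\<chi> i. (\<Sum>l\<in>UNIV. adj3 (M p) i l * Kc p x y (axis l 1)) / det3 (M p))"

lemma det_nz: assumes p: "p \<in> U" shows "det3 (M p) \<noteq> 0"
proof -
  define L where "L = (\<lambda>w. \<chi> j. g p w (axis j 1))"
  have lin: "linear L" unfolding L_def
    by (rule linearI) (simp_all add: vec_eq_iff g_add1[OF p] g_scale1[OF p])
  have "inj L"
  proof (rule linear_injective_0[OF lin, THEN iffD2], intro allI impI)
    fix w assume "L w = 0"
    then have "\<forall>j. g p w (axis j 1) = 0" unfolding L_def by (simp add: vec_eq_iff)
    then have "g p w w = 0" using lin_expand[OF g_linear2[OF p, of w], of w] by simp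
    then show "w = 0" using g_pos[OF p, of w] by fastforce
  qed
  then have "det (matrix L) \<noteq> 0" using det_nz_iff_inj[OF lin] by simp
  moreover have "matrix L = (\<chi> i j. M p j i)" unfolding L_def matrix_def by simp
  ultimately show ?thesis using det3_det by simp
qed

lemma Kc_linear3: "p \<in> U \<Longrightarrow> linear (\<lambda>z. Kc p x y z)"
proof -
  assume p: "p \<in> U"
  show ?thesis unfolding Kc_def
    by (intro linear_compose_add linear_compose_sub linearI)
      (auto simp: add_divide_distrib diff_divide_distrib linear_add[OF dg_linear3[OF p]]
        linear_add[OF dg_linear[OF p]] linear_scale[OF dg_linear3[OF p]] linear_scale[OF dg_linear[OF p]] algebra_simps)
qed

lemma Gam_char: assumes p: "p \<in> U" shows "g p (Gam p x y) z = Kc p x y z"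
proof -
  define w where "w = Gam p x y"
  have "g p w z = (\<Sum>i\<in>UNIV. \<Sum>j\<in>UNIV. w$i * z$j * M p i j)" by (rule g_expand[OF p])
  also have "\<dots> = (\<Sum>j\<in>UNIV. \<Sum>i\<in>UNIV. w$i * z$j * M p i j)" by (subst sum.swap) (rule refl)
  also have "\<dots> = (\<Sum>j\<in>UNIV. z$j * (\<Sum>i\<in>UNIV. M p j i * w$i))"
  proof (rule sum.cong[OF refl])
    fix j
    show "(\<Sum>i\<in>UNIV. w$i * z$j * M p i j) = z$j * (\<Sum>i\<in>UNIV. M p j i * w$i)"
      unfolding sum_distrib_left by (rule sum.cong[OF refl]) (simp add: g_sym[OF p, of "axis j 1"])
  qed
  also have "\<dots> = (\<Sum>j\<in>UNIV. z$j * Kc p x y (axis j 1))"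
    unfolding w_def Gam_def using cramer3[OF det_nz[OF p]] by simp
  also have "\<dots> = Kc p x y z" using lin_expand[OF Kc_linear3[OF p, of x y], of z] by simp
  finally show ?thesis unfolding w_def .
qed

lemma chr_unique:
  assumes p: "p \<in> U" and w: "\<forall>z. g p w z = Kc p x y z"
  shows "w = Gam p x y"
proof -
  have "g p (w - Gam p x y) (w - Gam p x y) = 0"
    using w Gam_char[OF p] by (simp add: g_diff1[OF p])
  then show ?thesis using g_pos[OF p, of "w - Gam p x y"] by fastforce
qed

lemma chr_Gam: assumes p: "p \<in> U" shows "christoffel g p x y = Gam p x y"
  unfolding christoffel_def
proof (rule the_equality)
  show "\<forall>z. g p (Gam p x y) z = (dg g p x y z + dg g p y x z - dg g p z x y) / 2"
    using Gam_char[OF p] unfolding Kc_def by simp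
next
  fix w assume "\<forall>z. g p w z = (dg g p x y z + dg g p y x z - dg g p z x y) / 2"
  then show "w = Gam p x y" using chr_unique[OF p] unfolding Kc_def by simp
qed

lemma chr_char: "p \<in> U \<Longrightarrow> g p (christoffel g p x y) z = Kc p x y z"
  using chr_Gam Gam_char by simp

lemma chr_uniq: "p \<in> U \<Longrightarrow> \<forall>z. g p w z = Kc p x y z \<Longrightarrow> christoffel g p x y = w"
  using chr_Gam chr_unique by simp

lemma Kc_sym: "p \<in> U \<Longrightarrow> Kc p x y z = Kc p y x z"
  unfolding Kc_def using dg_sym[of p z x y] by simp

lemma chr_sym: "p \<in> U \<Longrightarrow> christoffel g p x y = christoffel g p y x"
  by (rule chr_uniq) (auto simp: chr_char Kc_sym)

lemma Kc_lin2: "p \<in> U \<Longrightarrow> Kc p x (a *\<^sub>R y1 + b *\<^sub>R y2) z = a * Kc p x y1 z + b * Kc p x y2 z"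
  unfolding Kc_def
  using linear_add[OF dg_linear2, of p x] linear_scale[OF dg_linear2, of p x]
    linear_add[OF dg_linear, of p] linear_scale[OF dg_linear, of p]
    linear_add[OF dg_linear3, of p z] linear_scale[OF dg_linear3, of p z]
  by (simp add: algebra_simps add_divide_distrib diff_divide_distrib)

lemma chr_lin2: "p \<in> U \<Longrightarrow> christoffel g p x (a *\<^sub>R y1 + b *\<^sub>R y2) = a *\<^sub>R christoffel g p x y1 + b *\<^sub>R christoffel g p x y2"
  by (rule chr_uniq) (auto simp: g_add1 g_scale1 chr_char Kc_lin2)

lemma chr_add2: "p \<in> U \<Longrightarrow> christoffel g p x (y1 + y2) = christoffel g p x y1 + christoffel g p x y2"
  using chr_lin2[of p x 1 y1 1 y2] by simp
lemma chr_scale2: "p \<in> U \<Longrightarrow> christoffel g p x (c *\<^sub>R y) = c *\<^sub>R christoffel g p x y"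
  using chr_lin2[of p x c y 0 y] by simp
lemma chr_add1: "p \<in> U \<Longrightarrow> christoffel g p (y1 + y2) x = christoffel g p y1 x + christoffel g p y2 x"
  using chr_add2[of p x y1 y2] chr_sym by metis
lemma chr_scale1: "p \<in> U \<Longrightarrow> christoffel g p (c *\<^sub>R y) x = c *\<^sub>R christoffel g p y x"
  using chr_scale2[of p x c y] chr_sym by metis
lemma chr_linear2: "p \<in> U \<Longrightarrow> linear (\<lambda>y. christoffel g p x y)"
  by (rule linearI) (auto simp: chr_add2 chr_scale2)
lemma chr_linear1: "p \<in> U \<Longrightarrow> linear (\<lambda>y. christoffel g p y x)"
  by (rule linearI) (auto simp: chr_add1 chr_scale1)
lemma chr_diff2: "p \<in> U \<Longrightarrow> christoffel g p x (y1 - y2) = christoffel g p x y1 - christoffel g p x y2"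
  using linear_diff[OF chr_linear2] by simp
lemma chr_neg2: "p \<in> U \<Longrightarrow> christoffel g p x (- y) = - christoffel g p x y"
  using linear_neg[OF chr_linear2] by simp
lemma chr_zero2: "p \<in> U \<Longrightarrow> christoffel g p x 0 = 0"
  using linear_0[OF chr_linear2] by simp
lemma chr_diff1: "p \<in> U \<Longrightarrow> christoffel g p (y1 - y2) x = christoffel g p y1 x - christoffel g p y2 x"
  using linear_diff[OF chr_linear1] by simp
lemma chr_neg1: "p \<in> U \<Longrightarrow> christoffel g p (- y) x = - christoffel g p y x"
  using linear_neg[OF chr_linear1] by simp
lemmas chr_simps = chr_add1 chr_add2 chr_scale1 chr_scale2 chr_diff1 chr_diff2 chr_neg1 chr_neg2 chr_zero2

lemma dg_chr: "p \<in> U \<Longrightarrow> dg g p x v w = g p (christoffel g p x v) w + g p v (christoffel g p x w)"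
  using chr_char[of p x v w] chr_char[of p x w v] g_sym[of p v] dg_sym[of p] unfolding Kc_def
  by (simp add: field_simps)

lemma dg_C: "C_inf_on U (\<lambda>q. dg g q x y z)"
  unfolding dg_def by (rule C_inf_deriv[OF g_C])

lemma Kc_cl: "cl U UNIV (\<lambda>_. 0) (\<lambda>q. Kc q x y z)"
  unfolding Kc_def by (intro cl_divide cl_diff cl.add cl.base dg_C cl.const) auto

lemma M_cl: "cl U UNIV (\<lambda>_. 0) (\<lambda>q. M q i j)"
  by (intro cl.base g_C)

lemma adj_cl: "cl U UNIV (\<lambda>_. 0) (\<lambda>q. adj3 (M q) i j)"
  unfolding adj3_def by (intro cl_diff cl.mult M_cl)

lemma det_cl: "cl U UNIV (\<lambda>_. 0) (\<lambda>q. det3 (M q))"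
  unfolding det3_def by (intro cl.sum ballI cl.mult M_cl adj_cl) auto

lemma chr_C: "C_inf_on U (\<lambda>q. christoffel g q x y $ k)"
proof (rule C_of_cl'[OF U_open])
  show "cl U UNIV (\<lambda>_. 0) (\<lambda>q. (\<Sum>l\<in>UNIV. adj3 (M q) k l * Kc q x y (axis l 1)) / det3 (M q))"
    by (intro cl_divide cl.sum ballI cl.mult adj_cl Kc_cl det_cl) (auto simp: det_nz)
  show "\<forall>q\<in>U. christoffel g q x y $ k = (\<Sum>l\<in>UNIV. adj3 (M q) k l * Kc q x y (axis l 1)) / det3 (M q)"
    by (simp add: chr_Gam Gam_def)
qed

end

context rm begin

lemma g_along:
  fixes Q V W :: "'a::real_normed_vector \<Rightarrow> pt"
  assumes S: "open S" "t \<in> S" "\<forall>t\<in>S. Q t \<in> U"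
    and dQ: "(Q has_derivative Q') (at t)" and dV: "(V has_derivative V') (at t)"
    and dW: "(W has_derivative W') (at t)"
  shows "((\<lambda>t. g (Q t) (V t) (W t)) has_derivative
     (\<lambda>h. g (Q t) (V' h) (W t) + g (Q t) (V t) (W' h) + dg g (Q t) (Q' h) (V t) (W t))) (at t)"
proof -
  have Qt: "Q t \<in> U" using S by auto
  have dVi: "((\<lambda>t. V t $ i) has_derivative (\<lambda>h. V' h $ i)) (at t)" for i
    using dV vec_has_derivative_iff by blast
  have dWi: "((\<lambda>t. W t $ i) has_derivative (\<lambda>h. W' h $ i)) (at t)" for i
    using dW vec_has_derivative_iff by blast
  have dM: "((\<lambda>t. M (Q t) i j) has_derivative (\<lambda>h. dg g (Q t) (Q' h) (axis i 1) (axis j 1))) (at t)" for i j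
    using diff_chain_at[OF dQ g_hasd[OF Qt]] by (simp add: o_def)
  have "((\<lambda>t. \<Sum>i\<in>UNIV. \<Sum>j\<in>UNIV. V t $ i * W t $ j * M (Q t) i j) has_derivative
    (\<lambda>h. \<Sum>i\<in>UNIV. \<Sum>j\<in>UNIV. V t $ i * W t $ j * dg g (Q t) (Q' h) (axis i 1) (axis j 1) +
        (V t $ i * W' h $ j + V' h $ i * W t $ j) * M (Q t) i j)) (at t)"
    by (intro has_derivative_sum has_derivative_mult dVi dWi dM)
  then have "((\<lambda>t. g (Q t) (V t) (W t)) has_derivative
    (\<lambda>h. \<Sum>i\<in>UNIV. \<Sum>j\<in>UNIV. V t $ i * W t $ j * dg g (Q t) (Q' h) (axis i 1) (axis j 1) +
        (V t $ i * W' h $ j + V' h $ i * W t $ j) * M (Q t) i j)) (at t)"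
    by (rule has_derivative_transform_within_open[OF _ S(1,2)]) (rule g_expand[symmetric], use S in auto)
  moreover have "(\<lambda>h. \<Sum>i\<in>UNIV. \<Sum>j\<in>UNIV. V t $ i * W t $ j * dg g (Q t) (Q' h) (axis i 1) (axis j 1) +
        (V t $ i * W' h $ j + V' h $ i * W t $ j) * M (Q t) i j) =
      (\<lambda>h. g (Q t) (V' h) (W t) + g (Q t) (V t) (W' h) + dg g (Q t) (Q' h) (V t) (W t))"
  proof (rule ext)
    fix h
    show "(\<Sum>i\<in>UNIV. \<Sum>j\<in>UNIV. V t $ i * W t $ j * dg g (Q t) (Q' h) (axis i 1) (axis j 1) +
        (V t $ i * W' h $ j + V' h $ i * W t $ j) * M (Q t) i j) =
      g (Q t) (V' h) (W t) + g (Q t) (V t) (W' h) + dg g (Q t) (Q' h) (V t) (W t)"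
      unfolding g_expand[OF Qt, of "V' h"] g_expand[OF Qt, of "V t" "W' h"] dg_expand[OF Qt, of _ "V t"]
      by (simp add: sum.distrib algebra_simps)
  qed
  ultimately show ?thesis by (rule has_derivative_eq_rhs)
qed

lemma g_along_cov:
  fixes Q V W :: "'a::real_normed_vector \<Rightarrow> pt"
  assumes S: "open S" "t \<in> S" "\<forall>t\<in>S. Q t \<in> U"
    and dQ: "(Q has_derivative Q') (at t)" and dV: "(V has_derivative V') (at t)"
    and dW: "(W has_derivative W') (at t)"
  shows "((\<lambda>t. g (Q t) (V t) (W t)) has_derivative
     (\<lambda>h. g (Q t) (V' h + christoffel g (Q t) (Q' h) (V t)) (W t)
        + g (Q t) (V t) (W' h + christoffel g (Q t) (Q' h) (W t)))) (at t)"
proof -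
  have Qt: "Q t \<in> U" using S by auto
  show ?thesis
    using g_along[OF assms]
    by (rule has_derivative_eq_rhs) (auto simp: dg_chr[OF Qt] g_add1[OF Qt] g_add2[OF Qt])
qed

end

lemma field_hasd:
  assumes "\<forall>i. C_inf_on S (\<lambda>q. V q $ i)" "p \<in> S"
  shows "(V has_derivative (\<lambda>v. \<chi> i. frechet_derivative (\<lambda>q. V q $ i) (at p) v)) (at p)"
proof -
  have "\<forall>i. ((\<lambda>x. V x $ i) has_derivative frechet_derivative (\<lambda>q. V q $ i) (at p)) (at p)"
    using C_inf_diff assms by blast
  then show ?thesis unfolding vec_has_derivative_iff by simp
qed

lemma field_fd:
  assumes "\<forall>i. C_inf_on S (\<lambda>q. V q $ i)" "p \<in> S"
  shows "(V has_derivative frechet_derivative V (at p)) (at p)"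
  using field_hasd[OF assms] frechet_derivative_at by metis

lemma deriv_eq_on:
  assumes "open S" "p \<in> S" "(f has_derivative f') (at p)" "\<forall>q\<in>S. f q = f2 q"
    "(f2 has_derivative f2') (at p)"
  shows "f' = f2'"
proof -
  have "(f2 has_derivative f') (at p)"
    using has_derivative_transform_within_open[OF assms(3,1,2)] assms(4) by auto
  then show ?thesis using has_derivative_unique assms(5) by blast
qed

context rm begin

lemma chr_field: "p \<in> U \<Longrightarrow> ((\<lambda>q. christoffel g q y z) has_derivative frechet_derivative (\<lambda>q. christoffel g q y z) (at p)) (at p)"
  using field_fd[of U "\<lambda>q. christoffel g q y z"] chr_C by auto

lemma curv_zz:
  assumes p: "p \<in> U"
  shows "g p (curvature g p x y z) z = 0"
proof -
  have key: "g p (cov_deriv g (\<lambda>q. christoffel g q y z) p x) z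
      = frechet_derivative (\<lambda>q. dg g q y z z) (at p) x / 2 - g p (christoffel g p y z) (christoffel g p x z)"
    for x y
  proof -
    have d1: "((\<lambda>q. g q (christoffel g q y z) z) has_derivative
      (\<lambda>x. g p (frechet_derivative (\<lambda>q. christoffel g q y z) (at p) x + christoffel g p x (christoffel g p y z)) z
         + g p (christoffel g p y z) (0 + christoffel g p x z))) (at p)"
      using g_along_cov[OF U_open p _ has_derivative_ident chr_field[OF p, of y z] has_derivative_const[of z]]
      by simp
    have d2: "((\<lambda>q. dg g q y z z / 2) has_derivative (\<lambda>x. frechet_derivative (\<lambda>q. dg g q y z z) (at p) x / 2)) (at p)"
      using has_derivative_mult_left[OF C_inf_diff[OF dg_C[of y z z] p], of "1/2"] by simp
    have eq: "\<forall>q\<in>U. g q (christoffel g q y z) z = dg g q y z z / 2"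
      by (auto simp: chr_char Kc_def)
    from deriv_eq_on[OF U_open p d1 eq d2] have "\<forall>x. g p (frechet_derivative (\<lambda>q. christoffel g q y z) (at p) x + christoffel g p x (christoffel g p y z)) z
         + g p (christoffel g p y z) (0 + christoffel g p x z) = frechet_derivative (\<lambda>q. dg g q y z z) (at p) x / 2"
      by metis
    then show ?thesis unfolding cov_deriv_def by (simp add: algebra_simps)
  qed
  have sw: "frechet_derivative (\<lambda>q. dg g q y z z) (at p) x = frechet_derivative (\<lambda>q. dg g q x z z) (at p) y"
    unfolding dg_def by (rule schwarz[OF U_open g_C p])
  show ?thesis
    unfolding curvature_def g_diff1[OF p] key sw using g_sym[OF p, of "christoffel g p y z"] by simp
qed

end

locale fk = rm +
  fixes \<phi> :: "pt \<Rightarrow> pt \<Rightarrow> pt" and \<xi> :: "pt \<Rightarrow> pt" and \<eta> :: "pt \<Rightarrow> pt \<Rightarrow> real" and f :: "pt \<Rightarrow> real"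
  assumes FK: "f_kenmotsu U g \<phi> \<xi> \<eta> f"
begin

lemma xi_C: "C_inf_on U (\<lambda>p. \<xi> p $ i)"
  using FK unfolding f_kenmotsu_def vf_smooth_def by blast
lemma f_C: "C_inf_on U f"
  using FK unfolding f_kenmotsu_def by blast
lemma eta_g: "p \<in> U \<Longrightarrow> \<eta> p X = g p X (\<xi> p)"
  using FK unfolding f_kenmotsu_def by blast
lemma eta_xi: "p \<in> U \<Longrightarrow> \<eta> p (\<xi> p) = 1"
  using FK unfolding f_kenmotsu_def by blast
lemma nabla_xi: "p \<in> U \<Longrightarrow> cov_deriv g \<xi> p X = f p *\<^sub>R (X - \<eta> p X *\<^sub>R \<xi> p)"
  using FK unfolding f_kenmotsu_def by blast
lemma df_eta: "p \<in> U \<Longrightarrow> frechet_derivative f (at p) X * \<eta> p Y - frechet_derivative f (at p) Y * \<eta> p X = 0"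
  using FK unfolding f_kenmotsu_def by blast

lemma xi_fd: "p \<in> U \<Longrightarrow> (\<xi> has_derivative frechet_derivative \<xi> (at p)) (at p)"
  using field_fd[of U \<xi>] xi_C by auto

lemma f_fd: "p \<in> U \<Longrightarrow> (f has_derivative frechet_derivative f (at p)) (at p)"
  using C_inf_diff[OF f_C] by blast

lemma ez_C: "C_inf_on U (\<lambda>q. g q z (\<xi> q))"
proof (rule C_of_cl'[OF U_open])
  show "cl U UNIV (\<lambda>_. 0) (\<lambda>q. \<Sum>j\<in>UNIV. \<xi> q $ j * g q z (axis j 1))"
    by (intro cl.sum ballI cl.mult cl.base xi_C g_C) auto
  show "\<forall>q\<in>U. g q z (\<xi> q) = (\<Sum>j\<in>UNIV. \<xi> q $ j * g q z (axis j 1))"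
    using lin_expand[OF g_linear2] by auto
qed

lemma ez_fd: "p \<in> U \<Longrightarrow> ((\<lambda>q. g q z (\<xi> q)) has_derivative frechet_derivative (\<lambda>q. g q z (\<xi> q)) (at p)) (at p)"
  using C_inf_diff[OF ez_C] by blast

lemma E_id:
  assumes p: "p \<in> U"
  shows "frechet_derivative (\<lambda>q. g q z (\<xi> q)) (at p) y
      = g p (christoffel g p y z) (\<xi> p) + f p * (g p z y - \<eta> p y * \<eta> p z)"
proof -
  have d1: "((\<lambda>q. g q z (\<xi> q)) has_derivative
      (\<lambda>y. g p (0 + christoffel g p y z) (\<xi> p) + g p z (frechet_derivative \<xi> (at p) y + christoffel g p y (\<xi> p)))) (at p)"
    using g_along_cov[OF U_open p _ has_derivative_ident has_derivative_const[of z] xi_fd[OF p]] by simp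
  have "frechet_derivative (\<lambda>q. g q z (\<xi> q)) (at p) = 
      (\<lambda>y. g p (0 + christoffel g p y z) (\<xi> p) + g p z (frechet_derivative \<xi> (at p) y + christoffel g p y (\<xi> p)))"
    using frechet_derivative_at[OF d1] by simp
  then have "frechet_derivative (\<lambda>q. g q z (\<xi> q)) (at p) y = g p (christoffel g p y z) (\<xi> p) + g p z (cov_deriv g \<xi> p y)"
    unfolding cov_deriv_def by simp
  also have "\<dots> = g p (christoffel g p y z) (\<xi> p) + f p * (g p z y - \<eta> p y * \<eta> p z)"
    unfolding nabla_xi[OF p] using eta_g[OF p] by (simp add: g_simps[OF p] algebra_simps)
  finally show ?thesis .
qed

lemma curv_xi:
  assumes p: "p \<in> U"
  shows "g p (curvature g p x y z) (\<xi> p) =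
     - frechet_derivative f (at p) x * (g p z y - \<eta> p y * \<eta> p z)
     + frechet_derivative f (at p) y * (g p z x - \<eta> p x * \<eta> p z)
     + (f p)^2 * (\<eta> p y * (g p z x - \<eta> p x * \<eta> p z) - \<eta> p x * (g p z y - \<eta> p y * \<eta> p z))"
proof -
  define E where "E z y = frechet_derivative (\<lambda>q. g q z (\<xi> q)) (at p) y" for z y
  define EE where "EE z y x = frechet_derivative (\<lambda>q. frechet_derivative (\<lambda>q. g q z (\<xi> q)) (at q) y) (at p) x" for z y x
  define A where "A y z = g p (christoffel g p y z) (\<xi> p)" for y z
  define Df where "Df x = frechet_derivative f (at p) x" for x
  have key: "g p (cov_deriv g (\<lambda>q. christoffel g q y z) p x) (\<xi> p) =
     EE z y x - Df x * (g p z y - \<eta> p y * \<eta> p z)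
     - f p * (dg g p x z y - E y x * \<eta> p z - \<eta> p y * E z x)
     - f p * (Kc p y z x - \<eta> p x * A y z)" for x y
  proof -
    have d1: "((\<lambda>q. g q (christoffel g q y z) (\<xi> q)) has_derivative
      (\<lambda>x. g p (frechet_derivative (\<lambda>q. christoffel g q y z) (at p) x + christoffel g p x (christoffel g p y z)) (\<xi> p)
         + g p (christoffel g p y z) (frechet_derivative \<xi> (at p) x + christoffel g p x (\<xi> p)))) (at p)"
      using g_along_cov[OF U_open p _ has_derivative_ident chr_field[OF p, of y z] xi_fd[OF p]]
      by simp
    have EEd: "((\<lambda>q. frechet_derivative (\<lambda>q. g q z (\<xi> q)) (at q) y) has_derivative EE z y) (at p)"
      unfolding EE_def using C_inf_diff[OF C_inf_deriv[OF ez_C] p] by blast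
    have d2: "((\<lambda>q. frechet_derivative (\<lambda>q. g q z (\<xi> q)) (at q) y - f q * (g q z y - g q y (\<xi> q) * g q z (\<xi> q)))
       has_derivative (\<lambda>x. EE z y x - (f p * (dg g p x z y - (g p y (\<xi> p) * E z x + E y x * g p z (\<xi> p)))
           + Df x * (g p z y - g p y (\<xi> p) * g p z (\<xi> p))))) (at p)"
      unfolding E_def Df_def
      by (intro has_derivative_diff has_derivative_mult EEd f_fd[OF p] g_hasd[OF p] ez_fd[OF p])
    have eq: "\<forall>q\<in>U. g q (christoffel g q y z) (\<xi> q) =
        frechet_derivative (\<lambda>q. g q z (\<xi> q)) (at q) y - f q * (g q z y - g q y (\<xi> q) * g q z (\<xi> q))"
      using E_id eta_g by simp
    from deriv_eq_on[OF U_open p d1 eq d2]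
    have "g p (frechet_derivative (\<lambda>q. christoffel g q y z) (at p) x + christoffel g p x (christoffel g p y z)) (\<xi> p)
         + g p (christoffel g p y z) (frechet_derivative \<xi> (at p) x + christoffel g p x (\<xi> p))
       = EE z y x - (f p * (dg g p x z y - (g p y (\<xi> p) * E z x + E y x * g p z (\<xi> p)))
           + Df x * (g p z y - g p y (\<xi> p) * g p z (\<xi> p)))"
      by metis
    then have "g p (cov_deriv g (\<lambda>q. christoffel g q y z) p x) (\<xi> p) + g p (christoffel g p y z) (cov_deriv g \<xi> p x)
       = EE z y x - (f p * (dg g p x z y - (\<eta> p y * E z x + E y x * \<eta> p z))
           + Df x * (g p z y - \<eta> p y * \<eta> p z))"
      unfolding cov_deriv_def using eta_g[OF p] by simp
    moreover have "g p (christoffel g p y z) (cov_deriv g \<xi> p x) = f p * (Kc p y z x - \<eta> p x * A y z)"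
      unfolding nabla_xi[OF p] A_def using eta_g[OF p] chr_char[OF p]
      by (simp add: g_simps[OF p] algebra_simps)
    ultimately show ?thesis by (simp add: algebra_simps)
  qed
  have sw: "EE z y x = EE z x y" unfolding EE_def by (rule schwarz[OF U_open ez_C p])
  have Ex: "E a b = A b a + f p * (g p a b - \<eta> p b * \<eta> p a)" for a b
    unfolding E_def A_def using E_id[OF p] .
  have Asym: "A x y = A y x" unfolding A_def using chr_sym[OF p] by simp
  have Kd: "Kc p y z x - Kc p x z y = dg g p y z x - dg g p x z y"
    unfolding Kc_def using dg_sym[OF p, of z] dg_sym[OF p, of x] dg_sym[OF p, of y] by (simp add: field_simps)
  have gs: "g p x y = g p y x" using g_sym[OF p] by simp
  have Kd': "f p * dg g p y z x + f p * Kc p x z y = f p * dg g p x z y + f p * Kc p y z x"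
    using arg_cong[OF Kd, of "\<lambda>t. f p * t"] by (simp add: algebra_simps)
  show ?thesis
    unfolding curvature_def g_diff1[OF p] key sw Ex Df_def[symmetric]
    using Asym Kd' gs by (simp add: algebra_simps power2_eq_square)
qed

definition hh :: "pt \<Rightarrow> real" where "hh q = frechet_derivative f (at q) (\<xi> q)"

lemma df_hh: assumes q: "q \<in> U" shows "frechet_derivative f (at q) v = hh q * \<eta> q v"
  using df_eta[OF q, of v "\<xi> q"] eta_xi[OF q] unfolding hh_def by simp

lemma hh_C: "C_inf_on U hh"
proof (rule C_of_cl'[OF U_open])
  show "cl U UNIV (\<lambda>_. 0) (\<lambda>q. \<Sum>j\<in>UNIV. \<xi> q $ j * frechet_derivative f (at q) (axis j 1))"
    by (intro cl.sum ballI cl.mult cl.base xi_C C_inf_deriv[OF f_C]) auto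
  show "\<forall>q\<in>U. hh q = (\<Sum>j\<in>UNIV. \<xi> q $ j * frechet_derivative f (at q) (axis j 1))"
  proof
    fix q assume q: "q \<in> U"
    have "linear (frechet_derivative f (at q))" using f_fd[OF q] has_derivative_linear by blast
    then show "hh q = (\<Sum>j\<in>UNIV. \<xi> q $ j * frechet_derivative f (at q) (axis j 1))"
      unfolding hh_def by (rule lin_expand)
  qed
qed

lemma hh_fd: "p \<in> U \<Longrightarrow> (hh has_derivative frechet_derivative hh (at p)) (at p)"
  using C_inf_diff[OF hh_C] by blast

lemma dhh:
  assumes p: "p \<in> U"
  shows "frechet_derivative hh (at p) x = frechet_derivative hh (at p) (\<xi> p) * \<eta> p x"
proof -
  define E where "E z y = frechet_derivative (\<lambda>q. g q z (\<xi> q)) (at p) y" for z y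
  define Dh where "Dh x = frechet_derivative hh (at p) x" for x
  have key: "frechet_derivative (\<lambda>q. frechet_derivative f (at q) y) (at p) x = hh p * E y x + Dh x * \<eta> p y" for x y
  proof -
    have d1: "((\<lambda>q. frechet_derivative f (at q) y) has_derivative
        frechet_derivative (\<lambda>q. frechet_derivative f (at q) y) (at p)) (at p)"
      using C_inf_diff[OF C_inf_deriv[OF f_C] p] by blast
    have d2: "((\<lambda>q. hh q * g q y (\<xi> q)) has_derivative (\<lambda>x. hh p * E y x + Dh x * g p y (\<xi> p))) (at p)"
      unfolding E_def Dh_def by (intro has_derivative_mult hh_fd[OF p] ez_fd[OF p])
    have eq: "\<forall>q\<in>U. frechet_derivative f (at q) y = hh q * g q y (\<xi> q)"
      using df_hh eta_g by simp
    from deriv_eq_on[OF U_open p d1 eq d2] show ?thesis using eta_g[OF p] by metis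
  qed
  have sw: "frechet_derivative (\<lambda>q. frechet_derivative f (at q) y) (at p) x =
            frechet_derivative (\<lambda>q. frechet_derivative f (at q) x) (at p) y" for x y
    by (rule schwarz[OF U_open f_C p])
  have Esym: "E y x = E x y" for x y
    unfolding E_def E_id[OF p] using chr_sym[OF p, of x y] g_sym[OF p, of x y] by simp
  have "Dh x * \<eta> p y = Dh y * \<eta> p x" for x y
    using key[of y x] key[of x y] sw[of x y] Esym[of x y] by simp
  from this[of x "\<xi> p"] show ?thesis unfolding Dh_def using eta_xi[OF p] by simp
qed

end

lemma real_fd_scale:
  fixes u :: "real \<Rightarrow> real"
  assumes "(u has_derivative D) (at s)"
  shows "D h = h * D 1"
proof -
  have "linear D" using assms has_derivative_linear by blast
  then show ?thesis using linear_scale[of D h 1] by simp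
qed

lemma zero_deriv:
  assumes "open I" "s \<in> I" "\<forall>t\<in>I. u t = 0" "(u has_real_derivative u') (at s)"
  shows "u' = 0"
proof -
  have "((\<lambda>_. 0) has_real_derivative u') (at s)"
    using has_field_derivative_transform_within_open[OF assms(4) assms(1,2)] assms(3) by auto
  then show ?thesis using DERIV_const DERIV_unique by blast
qed

lemma decomp3:
  fixes G :: "pt \<Rightarrow> pt \<Rightarrow> real"
  assumes lin1: "\<And>x y z a b. G (a *\<^sub>R x + b *\<^sub>R y) z = a * G x z + b * G y z"
    and sym: "\<And>x y. G x y = G y x"
    and pos: "\<And>x. x \<noteq> 0 \<Longrightarrow> G x x > 0"
    and on: "G T T = 1" "G N N = 1" "G B B = 1" "G T N = 0" "G T B = 0" "G N B = 0"
  shows "v = G v T *\<^sub>R T + G v N *\<^sub>R N + G v B *\<^sub>R B"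
proof -
  have add1: "G (x + y) z = G x z + G y z" for x y z using lin1[of 1 x 1 y z] by simp
  have sc1: "G (a *\<^sub>R x) z = a * G x z" for a x z using lin1[of a x 0 x z] by simp
  have add2: "G z (x + y) = G z x + G z y" for x y z using add1 sym by metis
  have sc2: "G z (a *\<^sub>R x) = a * G z x" for a x z using sc1 sym by metis
  have diff1: "G (x - y) z = G x z - G y z" for x y z using lin1[of 1 x "-1" y z] by simp
  define L where "L = (\<lambda>x. vector [G x T, G x N, G x B] :: real^3)"
  have lin: "linear L"
    by (rule linearI) (simp_all add: L_def vec_eq_iff forall_3 vector_3 add1 sc1)
  have surj: "surj L"
  proof (rule surjI)
    fix y :: "real^3"
    show "L (y$1 *\<^sub>R T + y$2 *\<^sub>R N + y$3 *\<^sub>R B) = y"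
      using on sym[of N T] sym[of B T] sym[of B N]
      by (simp add: L_def vec_eq_iff forall_3 vector_3 add1 sc1)
  qed
  have inj: "inj L" by (rule linear_surj_imp_inj[OF lin surj])
  define w where "w = v - (G v T *\<^sub>R T + G v N *\<^sub>R N + G v B *\<^sub>R B)"
  have "L w = 0"
    using on sym[of N T] sym[of B T] sym[of B N]
    by (simp add: L_def w_def vec_eq_iff forall_3 vector_3 add1 sc1 diff1)
  then have "w = 0" using inj lin linear_0 by (metis injD)
  then show ?thesis unfolding w_def by simp
qed

locale fkc = fk +
  fixes I :: "real set" and \<gamma> :: "real \<Rightarrow> pt" and N B :: "real \<Rightarrow> pt" and k1 k2 :: "real \<Rightarrow> real"
  assumes I_open: "open I" and I_int: "is_interval I" and I_ne: "I \<noteq> {}"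
    and gU: "\<forall>s\<in>I. \<gamma> s \<in> U" and g_Cs: "\<forall>i. C_inf_on I (\<lambda>s. \<gamma> s $ i)"
    and TT: "\<forall>s\<in>I. g (\<gamma> s) (velocity \<gamma> s) (velocity \<gamma> s) = 1"
    and N_C: "\<forall>i. C_inf_on I (\<lambda>s. N s $ i)" and B_C: "\<forall>i. C_inf_on I (\<lambda>s. B s $ i)"
    and frame: "\<forall>s\<in>I. g (\<gamma> s) (N s) (N s) = 1 \<and> g (\<gamma> s) (B s) (B s) = 1 \<and>
                 g (\<gamma> s) (velocity \<gamma> s) (N s) = 0 \<and> g (\<gamma> s) (velocity \<gamma> s) (B s) = 0 \<and> g (\<gamma> s) (N s) (B s) = 0 \<and>
                 k1 s > 0 \<and> k2 s > 0 \<and>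
                 covD g \<gamma> (velocity \<gamma>) s = k1 s *\<^sub>R N s \<and>
                 covD g \<gamma> N s = - k1 s *\<^sub>R velocity \<gamma> s + k2 s *\<^sub>R B s \<and>
                 covD g \<gamma> B s = - k2 s *\<^sub>R N s"
    and leg: "\<forall>s\<in>I. \<eta> (\<gamma> s) (velocity \<gamma> s) = 0"
begin

abbreviation "SF V \<equiv> \<forall>i. C_inf_on I (\<lambda>s. V s $ i)"
definition vd :: "(real \<Rightarrow> pt) \<Rightarrow> real \<Rightarrow> pt" where
  "vd V s = (\<chi> i. frechet_derivative (\<lambda>t. V t $ i) (at s) 1)"
abbreviation "CI u \<equiv> cl I U \<gamma> u"

lemma CI_C: "CI u \<Longrightarrow> C_inf_on I u"
  using cl_C_inf[OF I_open U_open gU g_Cs] .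
lemma CI_C': "CI u \<Longrightarrow> \<forall>s\<in>I. v s = u s \<Longrightarrow> C_inf_on I v"
  using cl_C_inf'[OF I_open U_open gU g_Cs] by blast

lemma SF_vd: "SF V \<Longrightarrow> SF (vd V)"
  by (simp add: vd_def C_inf_deriv)

lemma SF_hasvd: fixes V :: "real \<Rightarrow> pt" assumes "SF V" "s \<in> I" shows "(V has_vector_derivative vd V s) (at s)"
proof -
  have "((\<lambda>t. V t $ i) has_derivative (\<lambda>h. h *\<^sub>R vd V s $ i)) (at s)" for i
  proof -
    have d: "((\<lambda>t. V t $ i) has_derivative frechet_derivative (\<lambda>t. V t $ i) (at s)) (at s)"
      using C_inf_diff assms by blast
    have "frechet_derivative (\<lambda>t. V t $ i) (at s) = (\<lambda>h. h *\<^sub>R vd V s $ i)"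
    proof (rule ext)
      fix h show "frechet_derivative (\<lambda>t. V t $ i) (at s) h = h *\<^sub>R vd V s $ i"
        using real_fd_scale[OF d, of h] unfolding vd_def by simp
    qed
    then show ?thesis using d by simp
  qed
  then show ?thesis unfolding has_vector_derivative_def vec_has_derivative_iff by simp
qed

lemma SF_vder: fixes V :: "real \<Rightarrow> pt" assumes "SF V" "s \<in> I" shows "vector_derivative V (at s) = vd V s"
  by (rule vector_derivative_at[OF SF_hasvd[OF assms]])

lemma SF_diffble: fixes V :: "real \<Rightarrow> pt" assumes "SF V" "s \<in> I" shows "V differentiable (at s)"
  by (rule differentiableI_vector[OF SF_hasvd[OF assms]])

lemma SF_transfer: fixes V W :: "real \<Rightarrow> pt" shows "SF V \<Longrightarrow> \<forall>s\<in>I. W s = V s \<Longrightarrow> SF W"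
proof (intro allI)
  fix i assume "SF V" "\<forall>s\<in>I. W s = V s"
  then show "C_inf_on I (\<lambda>s. W s $ i)" using C_transfer[OF I_open, of "\<lambda>s. V s $ i"] by simp
qed

lemma CI_g: "CI (\<lambda>s. g (\<gamma> s) x y)" using cl.comp[OF g_C] .
lemma CI_chr: "CI (\<lambda>s. christoffel g (\<gamma> s) x y $ k)" using cl.comp[OF chr_C] .
lemma CI_SF: "SF V \<Longrightarrow> CI (\<lambda>s. V s $ i)" using cl.base by blast

lemma SF_cl: "(\<And>i. CI (\<lambda>s. V s $ i)) \<Longrightarrow> SF V"
  using CI_C by blast

lemma T_vd: "s \<in> I \<Longrightarrow> velocity \<gamma> s = vd \<gamma> s"
  unfolding velocity_def using SF_vder g_Cs by blast

lemma SF_T: "SF (velocity \<gamma>)"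
  using SF_transfer[OF SF_vd[OF g_Cs]] T_vd by simp

lemma SF_Xi: "SF (\<lambda>s. \<xi> (\<gamma> s))"
  using CI_C[OF cl.comp[OF xi_C]] by simp

lemma SF_add: "SF V \<Longrightarrow> SF W \<Longrightarrow> SF (\<lambda>s. V s + W s)"
  unfolding vector_add_component
  apply (intro allI)
  apply (rule CI_C)
  apply (rule cl.add)
   apply (rule CI_SF, assumption)+
  done
lemma SF_diff: "SF V \<Longrightarrow> SF W \<Longrightarrow> SF (\<lambda>s. V s - W s)"
  unfolding vector_minus_component
  apply (intro allI)
  apply (rule CI_C)
  apply (rule cl_diff)
   apply (rule CI_SF, assumption)+
  done
lemma SF_scale: "C_inf_on I a \<Longrightarrow> SF V \<Longrightarrow> SF (\<lambda>s. a s *\<^sub>R V s)"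
  unfolding vector_scaleR_component real_scaleR_def
  apply (intro allI)
  apply (rule CI_C)
  apply (rule cl.mult)
   apply (erule cl.base)
  apply (rule CI_SF, assumption)
  done

lemma SF_g: "SF V \<Longrightarrow> SF W \<Longrightarrow> C_inf_on I (\<lambda>s. g (\<gamma> s) (V s) (W s))"
  apply (rule CI_C'[of "\<lambda>s. \<Sum>i\<in>UNIV. \<Sum>j\<in>UNIV. V s $ i * W s $ j * M (\<gamma> s) i j"])
   apply (intro cl.sum ballI cl.mult CI_g finite)
    apply (rule CI_SF, assumption)+
  apply (intro ballI)
  apply (rule g_expand)
  using gU apply blast
  done

lemma chr_expand: assumes p: "p \<in> U"
  shows "christoffel g p v w $ k = (\<Sum>i\<in>UNIV. \<Sum>j\<in>UNIV. v$i * w$j * christoffel g p (axis i 1) (axis j 1) $ k)"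
proof -
  have l1: "linear (\<lambda>v. christoffel g p v w $ k)" for w
    by (rule linearI) (simp_all add: chr_add1[OF p] chr_scale1[OF p])
  have l2: "linear (\<lambda>w. christoffel g p v w $ k)" for v
    by (rule linearI) (simp_all add: chr_add2[OF p] chr_scale2[OF p])
  have "christoffel g p v w $ k = (\<Sum>i\<in>UNIV. v$i * christoffel g p (axis i 1) w $ k)"
    using lin_expand[OF l1[of w], of v] by simp
  also have "\<dots> = (\<Sum>i\<in>UNIV. v$i * (\<Sum>j\<in>UNIV. w$j * christoffel g p (axis i 1) (axis j 1) $ k))"
  proof (rule sum.cong[OF refl])
    fix i show "v$i * christoffel g p (axis i 1) w $ k = v$i * (\<Sum>j\<in>UNIV. w$j * christoffel g p (axis i 1) (axis j 1) $ k)"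
      using lin_expand[OF l2[of "axis i 1"], of w] by simp
  qed
  also have "\<dots> = (\<Sum>i\<in>UNIV. \<Sum>j\<in>UNIV. v$i * w$j * christoffel g p (axis i 1) (axis j 1) $ k)"
    by (simp add: sum_distrib_left mult.assoc)
  finally show ?thesis .
qed

lemma SF_chr: "SF V \<Longrightarrow> SF W \<Longrightarrow> SF (\<lambda>s. christoffel g (\<gamma> s) (V s) (W s))"
proof (intro allI)
  fix k assume V: "SF V" and W: "SF W"
  show "C_inf_on I (\<lambda>s. christoffel g (\<gamma> s) (V s) (W s) $ k)"
    apply (rule CI_C'[of "\<lambda>s. \<Sum>i\<in>UNIV. \<Sum>j\<in>UNIV. V s $ i * W s $ j * christoffel g (\<gamma> s) (axis i 1) (axis j 1) $ k"])
     apply (intro cl.sum ballI cl.mult CI_chr finite)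
      apply (rule CI_SF, rule V)
     apply (rule CI_SF, rule W)
    apply (intro ballI)
    apply (rule chr_expand)
    using gU apply blast
    done
qed

lemma covD_eq: fixes V :: "real \<Rightarrow> pt" assumes "SF V" "s \<in> I"
  shows "covD g \<gamma> V s = vd V s + christoffel g (\<gamma> s) (velocity \<gamma> s) (V s)"
  unfolding covD_def SF_vder[OF assms] by simp

lemma SF_covD: fixes V :: "real \<Rightarrow> pt" assumes "SF V" shows "SF (covD g \<gamma> V)"
proof -
  have "SF (\<lambda>s. vd V s + christoffel g (\<gamma> s) (velocity \<gamma> s) (V s))"
    by (rule SF_add[OF SF_vd[OF assms] SF_chr[OF SF_T assms]])
  then show ?thesis by (rule SF_transfer) (simp add: covD_eq[OF assms])
qed

end

context fkc begin

abbreviation "T \<equiv> velocity \<gamma>"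
abbreviation "X \<equiv> (\<lambda>s. \<xi> (\<gamma> s))"

lemma gam_hasd: "s \<in> I \<Longrightarrow> (\<gamma> has_derivative (\<lambda>h. h *\<^sub>R T s)) (at s)"
  using SF_hasvd[OF g_Cs] T_vd unfolding has_vector_derivative_def by simp

lemma SF_hasd: fixes V :: "real \<Rightarrow> pt" shows "SF V \<Longrightarrow> s \<in> I \<Longrightarrow> (V has_derivative (\<lambda>h. h *\<^sub>R vd V s)) (at s)"
  using SF_hasvd unfolding has_vector_derivative_def by blast

lemma mc:
  fixes V W :: "real \<Rightarrow> pt"
  assumes V: "SF V" and W: "SF W" and s: "s \<in> I"
  shows "((\<lambda>s. g (\<gamma> s) (V s) (W s)) has_real_derivative
     (g (\<gamma> s) (covD g \<gamma> V s) (W s) + g (\<gamma> s) (V s) (covD g \<gamma> W s))) (at s)"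
proof -
  have p: "\<gamma> s \<in> U" using gU s by blast
  have d: "((\<lambda>s. g (\<gamma> s) (V s) (W s)) has_derivative
     (\<lambda>h. g (\<gamma> s) (h *\<^sub>R vd V s + christoffel g (\<gamma> s) (h *\<^sub>R T s) (V s)) (W s)
        + g (\<gamma> s) (V s) (h *\<^sub>R vd W s + christoffel g (\<gamma> s) (h *\<^sub>R T s) (W s)))) (at s)"
    by (rule g_along_cov[OF I_open s gU gam_hasd[OF s] SF_hasd[OF V s] SF_hasd[OF W s]])
  have eq: "(\<lambda>h. g (\<gamma> s) (h *\<^sub>R vd V s + christoffel g (\<gamma> s) (h *\<^sub>R T s) (V s)) (W s)
        + g (\<gamma> s) (V s) (h *\<^sub>R vd W s + christoffel g (\<gamma> s) (h *\<^sub>R T s) (W s)))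
     = (*) (g (\<gamma> s) (covD g \<gamma> V s) (W s) + g (\<gamma> s) (V s) (covD g \<gamma> W s))"
  proof (rule ext)
    fix h
    show "g (\<gamma> s) (h *\<^sub>R vd V s + christoffel g (\<gamma> s) (h *\<^sub>R T s) (V s)) (W s)
        + g (\<gamma> s) (V s) (h *\<^sub>R vd W s + christoffel g (\<gamma> s) (h *\<^sub>R T s) (W s))
     = (g (\<gamma> s) (covD g \<gamma> V s) (W s) + g (\<gamma> s) (V s) (covD g \<gamma> W s)) * h"
      unfolding covD_eq[OF V s] covD_eq[OF W s]
      by (simp add: chr_scale1[OF p] g_add1[OF p] g_add2[OF p] g_scale1[OF p] g_scale2[OF p] algebra_simps)
  qed
  show ?thesis unfolding has_field_derivative_def using d eq by simp
qed

lemma T_sf: "SF T" using SF_T .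
lemma vT_vd: "s \<in> I \<Longrightarrow> vector_derivative \<gamma> (at s) = T s" unfolding velocity_def by simp

lemma X_hasd: assumes s: "s \<in> I"
  shows "(X has_derivative (\<lambda>h. h *\<^sub>R frechet_derivative \<xi> (at (\<gamma> s)) (T s))) (at s)"
proof -
  have p: "\<gamma> s \<in> U" using gU s by blast
  have lin: "linear (frechet_derivative \<xi> (at (\<gamma> s)))" using xi_fd[OF p] has_derivative_linear by blast
  have "(X has_derivative (\<lambda>h. frechet_derivative \<xi> (at (\<gamma> s)) (h *\<^sub>R T s))) (at s)"
    using diff_chain_at[OF gam_hasd[OF s] xi_fd[OF p]] by (simp add: o_def)
  then show ?thesis using linear_scale[OF lin] by simp
qed

lemma covD_X: assumes s: "s \<in> I" shows "covD g \<gamma> X s = f (\<gamma> s) *\<^sub>R T s"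
proof -
  have p: "\<gamma> s \<in> U" using gU s by blast
  have "vector_derivative X (at s) = frechet_derivative \<xi> (at (\<gamma> s)) (T s)"
    using X_hasd[OF s] by (intro vector_derivative_at) (simp add: has_vector_derivative_def)
  then have "covD g \<gamma> X s = cov_deriv g \<xi> (\<gamma> s) (T s)" unfolding covD_def cov_deriv_def by simp
  also have "\<dots> = f (\<gamma> s) *\<^sub>R T s" unfolding nabla_xi[OF p] using leg s by simp
  finally show ?thesis .
qed

lemma TX0: "s \<in> I \<Longrightarrow> g (\<gamma> s) (T s) (X s) = 0"
  using leg eta_g gU by metis

lemma c_deriv: assumes s: "s \<in> I" shows "((\<lambda>s. f (\<gamma> s)) has_real_derivative 0) (at s)"
proof -
  have p: "\<gamma> s \<in> U" using gU s by blast
  have "((\<lambda>s. f (\<gamma> s)) has_derivative (\<lambda>h. frechet_derivative f (at (\<gamma> s)) (h *\<^sub>R T s))) (at s)"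
    using diff_chain_at[OF gam_hasd[OF s] f_fd[OF p]] by (simp add: o_def)
  moreover have "frechet_derivative f (at (\<gamma> s)) (h *\<^sub>R T s) = 0" for h
    using df_hh[OF p] TX0[OF s] eta_g[OF p] g_scale1[OF p] by simp
  moreover have "(*) (0::real) = (\<lambda>h. 0)" by auto
  ultimately show ?thesis unfolding has_field_derivative_def by simp
qed

lemma h_deriv: assumes s: "s \<in> I" shows "((\<lambda>s. hh (\<gamma> s)) has_real_derivative 0) (at s)"
proof -
  have p: "\<gamma> s \<in> U" using gU s by blast
  have "((\<lambda>s. hh (\<gamma> s)) has_derivative (\<lambda>h. frechet_derivative hh (at (\<gamma> s)) (h *\<^sub>R T s))) (at s)"
    using diff_chain_at[OF gam_hasd[OF s] hh_fd[OF p]] by (simp add: o_def)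
  moreover have "frechet_derivative hh (at (\<gamma> s)) (h *\<^sub>R T s) = 0" for h
    using dhh[OF p, of "h *\<^sub>R T s"] TX0[OF s] eta_g[OF p] g_scale1[OF p] by simp
  moreover have "(*) (0::real) = (\<lambda>h. 0)" by auto
  ultimately show ?thesis unfolding has_field_derivative_def by simp
qed

lemma const_on_I:
  assumes "\<forall>s\<in>I. (u has_real_derivative 0) (at s)"
  shows "\<exists>c. \<forall>s\<in>I. u s = c"
proof -
  have "convex I" using is_interval_convex[OF I_int] .
  moreover have "\<And>x. x \<in> I \<Longrightarrow> (u has_field_derivative 0) (at x within I)"
    using assms has_field_derivative_at_within by blast
  ultimately show ?thesis using has_field_derivative_zero_constant by blast
qed

definition s0 where "s0 = (SOME s. s \<in> I)"
lemma s0: "s0 \<in> I" unfolding s0_def using I_ne by (simp add: some_in_eq)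

definition c0 where "c0 = f (\<gamma> s0)"
definition m0 where "m0 = hh (\<gamma> s0) + c0^2"

lemma c_const: "s \<in> I \<Longrightarrow> f (\<gamma> s) = c0"
proof -
  obtain c where "\<forall>s\<in>I. f (\<gamma> s) = c" using const_on_I c_deriv by blast
  moreover assume "s \<in> I"
  ultimately show ?thesis unfolding c0_def using s0 by simp
qed

lemma m_const: "s \<in> I \<Longrightarrow> hh (\<gamma> s) + (f (\<gamma> s))^2 = m0"
proof -
  obtain c where "\<forall>s\<in>I. hh (\<gamma> s) = c" using const_on_I h_deriv by blast
  moreover assume "s \<in> I"
  ultimately show ?thesis unfolding m0_def using s0 c_const by simp
qed

lemma covD_X': "s \<in> I \<Longrightarrow> covD g \<gamma> X s = c0 *\<^sub>R T s"
  using covD_X c_const by simp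

definition al where "al s = g (\<gamma> s) (N s) (X s)"
definition be where "be s = g (\<gamma> s) (B s) (X s)"

lemma fr: assumes "s \<in> I" shows
  "g (\<gamma> s) (N s) (N s) = 1" "g (\<gamma> s) (B s) (B s) = 1"
  "g (\<gamma> s) (T s) (N s) = 0" "g (\<gamma> s) (T s) (B s) = 0" "g (\<gamma> s) (N s) (B s) = 0"
  "k1 s > 0" "k2 s > 0" "covD g \<gamma> T s = k1 s *\<^sub>R N s"
  "covD g \<gamma> N s = - k1 s *\<^sub>R T s + k2 s *\<^sub>R B s" "covD g \<gamma> B s = - k2 s *\<^sub>R N s"
  "g (\<gamma> s) (T s) (T s) = 1"
  using frame assms TT by auto

lemma pU: "s \<in> I \<Longrightarrow> \<gamma> s \<in> U" using gU by blast

lemma XX: "s \<in> I \<Longrightarrow> g (\<gamma> s) (X s) (X s) = 1"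
  using eta_xi[OF pU] eta_g[OF pU] by metis

lemma R1: assumes s: "s \<in> I" shows "k1 s * al s + c0 = 0"
proof -
  have d: "((\<lambda>s. g (\<gamma> s) (T s) (X s)) has_real_derivative
     (g (\<gamma> s) (covD g \<gamma> T s) (X s) + g (\<gamma> s) (T s) (covD g \<gamma> X s))) (at s)"
    by (rule mc[OF SF_T SF_Xi s])
  have "g (\<gamma> s) (covD g \<gamma> T s) (X s) + g (\<gamma> s) (T s) (covD g \<gamma> X s) = 0"
    using zero_deriv[OF I_open s _ d] TX0 by blast
  then show ?thesis
    unfolding fr(8)[OF s] covD_X'[OF s] al_def using fr(11)[OF s]
    by (simp add: g_scale1[OF pU[OF s]] g_scale2[OF pU[OF s]])
qed

lemma al_deriv: assumes s: "s \<in> I" shows "(al has_real_derivative k2 s * be s) (at s)"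
proof -
  have d: "(al has_real_derivative
     (g (\<gamma> s) (covD g \<gamma> N s) (X s) + g (\<gamma> s) (N s) (covD g \<gamma> X s))) (at s)"
    unfolding al_def by (rule mc[OF N_C SF_Xi s])
  moreover have "g (\<gamma> s) (covD g \<gamma> N s) (X s) + g (\<gamma> s) (N s) (covD g \<gamma> X s) = k2 s * be s"
    unfolding fr(9)[OF s] covD_X'[OF s] be_def using TX0[OF s] fr(3)[OF s] g_sym[OF pU[OF s], of "N s" "T s"]
    by (simp add: g_simps[OF pU[OF s]])
  ultimately show ?thesis by simp
qed

lemma be_deriv: assumes s: "s \<in> I" shows "(be has_real_derivative - k2 s * al s) (at s)"
proof -
  have d: "(be has_real_derivative
     (g (\<gamma> s) (covD g \<gamma> B s) (X s) + g (\<gamma> s) (B s) (covD g \<gamma> X s))) (at s)"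
    unfolding be_def by (rule mc[OF B_C SF_Xi s])
  moreover have "g (\<gamma> s) (covD g \<gamma> B s) (X s) + g (\<gamma> s) (B s) (covD g \<gamma> X s) = - k2 s * al s"
    unfolding fr(10)[OF s] covD_X'[OF s] al_def using fr(4)[OF s] g_sym[OF pU[OF s], of "B s" "T s"]
    by (simp add: g_simps[OF pU[OF s]])
  ultimately show ?thesis by simp
qed

lemma X_decomp: assumes s: "s \<in> I" shows "X s = al s *\<^sub>R N s + be s *\<^sub>R B s" "(al s)^2 + (be s)^2 = 1"
proof -
  have p: "\<gamma> s \<in> U" using pU[OF s] .
  have d: "X s = g (\<gamma> s) (X s) (T s) *\<^sub>R T s + g (\<gamma> s) (X s) (N s) *\<^sub>R N s + g (\<gamma> s) (X s) (B s) *\<^sub>R B s"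
    by (rule decomp3[of "g (\<gamma> s)"]) (use g_lin[OF p] g_sym[OF p] g_pos[OF p] fr[OF s] in auto)
  then show X: "X s = al s *\<^sub>R N s + be s *\<^sub>R B s"
  proof -
    have "g (\<gamma> s) (X s) (T s) = 0" using TX0[OF s] g_sym[OF p, of "X s" "T s"] by simp
    moreover have "g (\<gamma> s) (X s) (N s) = al s" unfolding al_def using g_sym[OF p] by simp
    moreover have "g (\<gamma> s) (X s) (B s) = be s" unfolding be_def using g_sym[OF p] by simp
    ultimately show ?thesis using d by simp
  qed
  have "1 = g (\<gamma> s) (X s) (X s)" using XX[OF s] by simp
  also have "\<dots> = g (\<gamma> s) (al s *\<^sub>R N s + be s *\<^sub>R B s) (al s *\<^sub>R N s + be s *\<^sub>R B s)"
    using X by simp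
  also have "\<dots> = (al s)^2 + (be s)^2"
    using fr[OF s] g_sym[OF p, of "B s" "N s"] by (simp add: g_simps[OF p] power2_eq_square algebra_simps)
  finally show "(al s)^2 + (be s)^2 = 1" by simp
qed

end

context fkc begin

lemma covD_local:
  fixes V W :: "real \<Rightarrow> pt"
  assumes "\<forall>t\<in>I. V t = W t" "s \<in> I"
  shows "covD g \<gamma> V s = covD g \<gamma> W s"
proof -
  have "(\<lambda>v. (V has_vector_derivative v) (at s)) = (\<lambda>v. (W has_vector_derivative v) (at s))"
  proof (rule ext, rule iffI)
    fix v assume "(V has_vector_derivative v) (at s)"
    then show "(W has_vector_derivative v) (at s)"
      by (rule has_vector_derivative_transform_within_open[OF _ I_open assms(2)]) (use assms in auto)
  next
    fix v assume "(W has_vector_derivative v) (at s)"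
    then show "(V has_vector_derivative v) (at s)"
      by (rule has_vector_derivative_transform_within_open[OF _ I_open assms(2)]) (use assms in auto)
  qed
  then have "vector_derivative V (at s) = vector_derivative W (at s)"
    unfolding vector_derivative_def by simp
  then show ?thesis unfolding covD_def using assms by simp
qed

lemma covD_comb:
  fixes V1 V2 V3 :: "real \<Rightarrow> pt" and a b e :: "real \<Rightarrow> real"
  assumes V: "SF V1" "SF V2" "SF V3" and s: "s \<in> I"
    and da: "(a has_real_derivative a') (at s)" and db: "(b has_real_derivative b') (at s)"
    and de: "(e has_real_derivative e') (at s)"
  shows "covD g \<gamma> (\<lambda>s. a s *\<^sub>R V1 s + b s *\<^sub>R V2 s + e s *\<^sub>R V3 s) s =
    a' *\<^sub>R V1 s + b' *\<^sub>R V2 s + e' *\<^sub>R V3 s + a s *\<^sub>R covD g \<gamma> V1 s + b s *\<^sub>R covD g \<gamma> V2 s + e s *\<^sub>R covD g \<gamma> V3 s"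
proof -
  have p: "\<gamma> s \<in> U" using pU[OF s] .
  have "((\<lambda>s. a s *\<^sub>R V1 s + b s *\<^sub>R V2 s + e s *\<^sub>R V3 s) has_vector_derivative
     (a s *\<^sub>R vd V1 s + a' *\<^sub>R V1 s) + (b s *\<^sub>R vd V2 s + b' *\<^sub>R V2 s) + (e s *\<^sub>R vd V3 s + e' *\<^sub>R V3 s)) (at s)"
    by (intro has_vector_derivative_add has_vector_derivative_scaleR da db de SF_hasvd V s)
  then have "vector_derivative (\<lambda>s. a s *\<^sub>R V1 s + b s *\<^sub>R V2 s + e s *\<^sub>R V3 s) (at s) =
     (a s *\<^sub>R vd V1 s + a' *\<^sub>R V1 s) + (b s *\<^sub>R vd V2 s + b' *\<^sub>R V2 s) + (e s *\<^sub>R vd V3 s + e' *\<^sub>R V3 s)"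
    by (rule vector_derivative_at)
  then show ?thesis
    unfolding covD_def[of g \<gamma> "\<lambda>s. a s *\<^sub>R V1 s + b s *\<^sub>R V2 s + e s *\<^sub>R V3 s"] covD_eq[OF V(1) s] covD_eq[OF V(2) s] covD_eq[OF V(3) s]
    by (simp add: chr_add2[OF p] chr_scale2[OF p] algebra_simps)
qed

definition dd :: "(real \<Rightarrow> real) \<Rightarrow> real \<Rightarrow> real" where "dd u s = frechet_derivative u (at s) 1"

lemma C_hasd: assumes "C_inf_on I u" "s \<in> I" shows "(u has_real_derivative dd u s) (at s)"
proof -
  have d: "(u has_derivative frechet_derivative u (at s)) (at s)" using C_inf_diff assms by blast
  have "frechet_derivative u (at s) = (\<lambda>h. dd u s * h)"
  proof (rule ext)
    fix h show "frechet_derivative u (at s) h = dd u s * h"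
      unfolding dd_def using real_fd_scale[OF d, of h] by (simp add: mult.commute)
  qed
  moreover have "(*) (dd u s) = (\<lambda>h. dd u s * h)" by auto
  ultimately show ?thesis unfolding has_field_derivative_def using d by metis
qed

lemma C_dd: "C_inf_on I u \<Longrightarrow> C_inf_on I (dd u)"
  unfolding dd_def by (rule C_inf_deriv)

lemma CI_mult: "C_inf_on I u \<Longrightarrow> C_inf_on I v \<Longrightarrow> C_inf_on I (\<lambda>s. u s * v s)"
  by (rule CI_C, rule cl.mult, erule cl.base, erule cl.base)

lemma k1_C: "C_inf_on I k1"
proof (rule C_transfer[OF I_open SF_g[OF SF_covD[OF SF_T] N_C]], intro ballI)
  fix s assume s: "s \<in> I"
  show "k1 s = g (\<gamma> s) (covD g \<gamma> T s) (N s)"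
    unfolding fr(8)[OF s] using fr(1)[OF s] by (simp add: g_scale1[OF pU[OF s]])
qed

lemma al_C: "C_inf_on I al" unfolding al_def by (rule SF_g[OF N_C SF_Xi])
lemma be_C: "C_inf_on I be" unfolding be_def by (rule SF_g[OF B_C SF_Xi])

definition kap where "kap s = k1 s * be s"
definition E where "E s = be s *\<^sub>R N s + (- al s) *\<^sub>R B s"

lemma kap_C: "C_inf_on I kap" unfolding kap_def by (rule CI_mult[OF k1_C be_C])

lemma SF_E: "SF E"
proof -
  have "SF (\<lambda>s. be s *\<^sub>R N s + (- al s) *\<^sub>R B s)"
  proof (rule SF_add[OF SF_scale[OF be_C N_C] SF_scale[OF _ B_C]])
    show "C_inf_on I (\<lambda>s. - al s)" using CI_C[OF cl_neg[OF cl.base[OF al_C]]] .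
  qed
  then show ?thesis unfolding E_def .
qed

lemma F1: assumes s: "s \<in> I" shows "covD g \<gamma> T s = kap s *\<^sub>R E s - c0 *\<^sub>R X s"
proof -
  have c: "c0 = - k1 s * al s" using R1[OF s] by simp
  have "k1 s *\<^sub>R N s = (k1 s * ((al s)^2 + (be s)^2)) *\<^sub>R N s" using X_decomp(2)[OF s] by simp
  also have "\<dots> = (k1 s * be s) *\<^sub>R (be s *\<^sub>R N s + (- al s) *\<^sub>R B s) - (- k1 s * al s) *\<^sub>R (al s *\<^sub>R N s + be s *\<^sub>R B s)"
    by (simp add: vec_eq_iff algebra_simps power2_eq_square)
  finally show ?thesis
    unfolding fr(8)[OF s] kap_def E_def c X_decomp(1)[OF s] .
qed

lemma F2: assumes s: "s \<in> I" shows "covD g \<gamma> E s = - kap s *\<^sub>R T s"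
proof -
  have "covD g \<gamma> E s = covD g \<gamma> (\<lambda>s. be s *\<^sub>R N s + (- al s) *\<^sub>R B s + (\<lambda>_. 0) s *\<^sub>R X s) s"
    by (rule covD_local[OF _ s]) (simp add: E_def)
  also have "\<dots> = (- k2 s * al s) *\<^sub>R N s + (- (k2 s * be s)) *\<^sub>R B s + 0 *\<^sub>R X s
      + be s *\<^sub>R covD g \<gamma> N s + (- al s) *\<^sub>R covD g \<gamma> B s + 0 *\<^sub>R covD g \<gamma> X s"
    by (rule covD_comb[OF N_C B_C SF_Xi s be_deriv[OF s] DERIV_minus[OF al_deriv[OF s]] DERIV_const])
  also have "\<dots> = - kap s *\<^sub>R T s"
    unfolding fr(9)[OF s] fr(10)[OF s] kap_def by (simp add: vec_eq_iff algebra_simps)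
  finally show ?thesis .
qed

lemma F3: "s \<in> I \<Longrightarrow> covD g \<gamma> X s = c0 *\<^sub>R T s" by (rule covD_X')

lemma comp_T: assumes s: "s \<in> I"
  shows "g (\<gamma> s) (a *\<^sub>R T s + b *\<^sub>R E s + e *\<^sub>R X s) (T s) = a"
proof -
  have p: "\<gamma> s \<in> U" using pU[OF s] .
  have "g (\<gamma> s) (N s) (T s) = 0" "g (\<gamma> s) (B s) (T s) = 0" "g (\<gamma> s) (X s) (T s) = 0"
    using fr(3,4)[OF s] TX0[OF s] g_sym[OF p] by metis+
  then show ?thesis unfolding E_def using fr(11)[OF s] by (simp add: g_simps[OF p])
qed

lemma comp_X: assumes s: "s \<in> I"
  shows "g (\<gamma> s) (a *\<^sub>R T s + b *\<^sub>R E s + e *\<^sub>R X s) (X s) = e"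
proof -
  have p: "\<gamma> s \<in> U" using pU[OF s] .
  show ?thesis unfolding E_def using TX0[OF s] XX[OF s]
    by (simp add: g_simps[OF p] al_def[symmetric] be_def[symmetric] algebra_simps)
qed

lemma kap_al: assumes s: "s \<in> I" shows "dd kap s * al s = - k1 s * k2 s"
proof -
  have dk1: "(k1 has_real_derivative dd k1 s) (at s)" by (rule C_hasd[OF k1_C s])
  have "((\<lambda>s. k1 s * al s + c0) has_real_derivative dd k1 s * al s + k1 s * (k2 s * be s)) (at s)"
    using DERIV_add[OF DERIV_mult[OF dk1 al_deriv[OF s]] DERIV_const[of c0]] by (simp add: algebra_simps)
  then have z: "dd k1 s * al s + k1 s * (k2 s * be s) = 0"
    by (rule zero_deriv[OF I_open s, rotated]) (use R1 in auto)
  have "(kap has_real_derivative dd k1 s * be s + k1 s * (- k2 s * al s)) (at s)"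
    unfolding kap_def[abs_def] using DERIV_mult[OF dk1 be_deriv[OF s]] by (simp add: algebra_simps)
  then have e1: "dd kap s = dd k1 s * be s + k1 s * (- k2 s * al s)"
    using DERIV_unique C_hasd[OF kap_C s] by blast
  have z': "dd k1 s * al s = - (k1 s * (k2 s * be s))" using z by simp
  have "dd kap s * al s = be s * (dd k1 s * al s) - k1 s * k2 s * (al s)^2"
    unfolding e1 by (simp add: algebra_simps power2_eq_square)
  also have "\<dots> = be s * (- (k1 s * (k2 s * be s))) - k1 s * k2 s * (al s)^2"
    unfolding z' ..
  also have "\<dots> = - k1 s * k2 s * ((al s)^2 + (be s)^2)"
    by (simp add: algebra_simps power2_eq_square)
  also have "\<dots> = - k1 s * k2 s" using X_decomp(2)[OF s] by simp
  finally show ?thesis .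
qed

lemma kap1_nz: "s \<in> I \<Longrightarrow> dd kap s \<noteq> 0"
  using kap_al fr(6,7) by force

lemma c0_nz: "c0 \<noteq> 0"
proof -
  have "al s0 \<noteq> 0" using kap_al[OF s0] fr(6,7)[OF s0] by force
  then show ?thesis using R1[OF s0] fr(6)[OF s0] by auto
qed

end

context fkc begin

primrec kk :: "nat \<Rightarrow> real \<Rightarrow> real" where
  "kk 0 = kap" | "kk (Suc n) = dd (kk n)"

lemma kk_C: "C_inf_on I (kk n)"
  by (induction n) (auto simp: kap_C C_dd)

lemma kk_d: "s \<in> I \<Longrightarrow> (kk n has_real_derivative kk (Suc n) s) (at s)"
  using C_hasd[OF kk_C] by simp

lemma kk_ds: assumes "s \<in> I" shows "(kk 0 has_real_derivative kk 1 s) (at s)"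
  "(kk 1 has_real_derivative kk 2 s) (at s)" "(kk 2 has_real_derivative kk 3 s) (at s)"
  "(kk 3 has_real_derivative kk 4 s) (at s)"
  "(kk 0 has_real_derivative kk (Suc 0) s) (at s)" "(kk (Suc 0) has_real_derivative kk 2 s) (at s)"
  using kk_d[OF assms, of 0] kk_d[OF assms, of 1] kk_d[OF assms, of 2] kk_d[OF assms, of 3]
  by (simp_all add: numeral_eq_Suc)

lemma kk0: "kk 0 = kap" by simp
declare kk.simps[simp del]

lemma frame_step:
  fixes a b e :: "real \<Rightarrow> real"
  assumes s: "s \<in> I"
    and da: "(a has_real_derivative a') (at s)" and db: "(b has_real_derivative b') (at s)"
    and de: "(e has_real_derivative e') (at s)"
    and eqs: "A = a' - b s * kk 0 s + e s * c0" "Bc = b' + a s * kk 0 s" "Ec = e' - a s * c0"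
  shows "covD g \<gamma> (\<lambda>s. a s *\<^sub>R T s + b s *\<^sub>R E s + e s *\<^sub>R X s) s = A *\<^sub>R T s + Bc *\<^sub>R E s + Ec *\<^sub>R X s"
  unfolding covD_comb[OF SF_T SF_E SF_Xi s da db de] F1[OF s] F2[OF s] F3[OF s] eqs kk0
  by (simp add: vec_eq_iff algebra_simps)

lemma funpow_covD: "(covD g \<gamma> ^^ Suc n) V = covD g \<gamma> ((covD g \<gamma> ^^ n) V)"
  by simp

lemma D1: "s \<in> I \<Longrightarrow> (covD g \<gamma> ^^ 1) T s = (0) *\<^sub>R T s + (((kk 0 s))) *\<^sub>R E s + (((-(c0)))) *\<^sub>R X s"
  using F1 by (simp add: kk0)

lemma D2: assumes s: "s \<in> I" shows "(covD g \<gamma> ^^ 2) T s = (((-((c0)^2)) + (-((kk 0 s)^2)))) *\<^sub>R T s + (((kk 1 s))) *\<^sub>R E s + (0) *\<^sub>R X s"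
proof -
  have "(covD g \<gamma> ^^ 2) T s = covD g \<gamma> ((covD g \<gamma> ^^ 1) T) s"
    using funpow_covD[of 1 T] by (simp add: numeral_eq_Suc)
  also have "\<dots> = covD g \<gamma> (\<lambda>s. (0) *\<^sub>R T s + (((kk 0 s))) *\<^sub>R E s + (((-(c0)))) *\<^sub>R X s) s"
    by (rule covD_local[OF _ s]) (use D1 in auto)
  also have "\<dots> = (((-((c0)^2)) + (-((kk 0 s)^2)))) *\<^sub>R T s + (((kk 1 s))) *\<^sub>R E s + (0) *\<^sub>R X s"
    by (rule frame_step[OF s]) (auto intro!: derivative_eq_intros kk_ds[OF s] kk_d[OF s] simp: algebra_simps eval_nat_numeral)
  finally show ?thesis .
qed

lemma D3: assumes s: "s \<in> I" shows "(covD g \<gamma> ^^ 3) T s = (((-3*kk 0 s*kk 1 s))) *\<^sub>R T s + (((kk 2 s) + (-(kk 0 s*(c0)^2)) + (-((kk 0 s)^3)))) *\<^sub>R E s + ((((c0)^3) + ((kk 0 s)^2*c0))) *\<^sub>R X s"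
proof -
  have "(covD g \<gamma> ^^ 3) T s = covD g \<gamma> ((covD g \<gamma> ^^ 2) T) s"
    using funpow_covD[of 2 T] by (simp add: numeral_eq_Suc)
  also have "\<dots> = covD g \<gamma> (\<lambda>s. (((-((c0)^2)) + (-((kk 0 s)^2)))) *\<^sub>R T s + (((kk 1 s))) *\<^sub>R E s + (0) *\<^sub>R X s) s"
    by (rule covD_local[OF _ s]) (use D2 in auto)
  also have "\<dots> = (((-3*kk 0 s*kk 1 s))) *\<^sub>R T s + (((kk 2 s) + (-(kk 0 s*(c0)^2)) + (-((kk 0 s)^3)))) *\<^sub>R E s + ((((c0)^3) + ((kk 0 s)^2*c0))) *\<^sub>R X s"
    by (rule frame_step[OF s]) (auto intro!: derivative_eq_intros kk_ds[OF s] kk_d[OF s] simp: algebra_simps eval_nat_numeral)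
  finally show ?thesis .
qed

lemma D4: assumes s: "s \<in> I" shows "(covD g \<gamma> ^^ 4) T s = ((((c0)^4) + (-3*(kk 1 s)^2) + (-4*kk 0 s*kk 2 s) + (2*(kk 0 s)^2*(c0)^2) + ((kk 0 s)^4))) *\<^sub>R T s + (((kk 3 s) + (-(kk 1 s*(c0)^2)) + (-6*(kk 0 s)^2*kk 1 s))) *\<^sub>R E s + (((5*kk 0 s*kk 1 s*c0))) *\<^sub>R X s"
proof -
  have "(covD g \<gamma> ^^ 4) T s = covD g \<gamma> ((covD g \<gamma> ^^ 3) T) s"
    using funpow_covD[of 3 T] by (simp add: numeral_eq_Suc)
  also have "\<dots> = covD g \<gamma> (\<lambda>s. (((-3*kk 0 s*kk 1 s))) *\<^sub>R T s + (((kk 2 s) + (-(kk 0 s*(c0)^2)) + (-((kk 0 s)^3)))) *\<^sub>R E s + ((((c0)^3) + ((kk 0 s)^2*c0))) *\<^sub>R X s) s"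
    by (rule covD_local[OF _ s]) (use D3 in auto)
  also have "\<dots> = ((((c0)^4) + (-3*(kk 1 s)^2) + (-4*kk 0 s*kk 2 s) + (2*(kk 0 s)^2*(c0)^2) + ((kk 0 s)^4))) *\<^sub>R T s + (((kk 3 s) + (-(kk 1 s*(c0)^2)) + (-6*(kk 0 s)^2*kk 1 s))) *\<^sub>R E s + (((5*kk 0 s*kk 1 s*c0))) *\<^sub>R X s"
    by (rule frame_step[OF s]) (auto intro!: derivative_eq_intros kk_ds[OF s] kk_d[OF s] simp: algebra_simps eval_nat_numeral)
  finally show ?thesis .
qed

lemma D5: assumes s: "s \<in> I" shows "(covD g \<gamma> ^^ 5) T s = (((-10*kk 1 s*kk 2 s) + (-5*kk 0 s*kk 3 s) + (10*kk 0 s*kk 1 s*(c0)^2) + (10*(kk 0 s)^3*kk 1 s))) *\<^sub>R T s + (((kk 4 s) + (-(kk 2 s*(c0)^2)) + (kk 0 s*(c0)^4) + (-15*kk 0 s*(kk 1 s)^2) + (-10*(kk 0 s)^2*kk 2 s) + (2*(kk 0 s)^3*(c0)^2) + ((kk 0 s)^5))) *\<^sub>R E s + (((-((c0)^5)) + (8*(kk 1 s)^2*c0) + (9*kk 0 s*kk 2 s*c0) + (-2*(kk 0 s)^2*(c0)^3) + (-((kk 0 s)^4*c0)))) *\<^sub>R X s"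
proof -
  have "(covD g \<gamma> ^^ 5) T s = covD g \<gamma> ((covD g \<gamma> ^^ 4) T) s"
    using funpow_covD[of 4 T] by (simp add: numeral_eq_Suc)
  also have "\<dots> = covD g \<gamma> (\<lambda>s. ((((c0)^4) + (-3*(kk 1 s)^2) + (-4*kk 0 s*kk 2 s) + (2*(kk 0 s)^2*(c0)^2) + ((kk 0 s)^4))) *\<^sub>R T s + (((kk 3 s) + (-(kk 1 s*(c0)^2)) + (-6*(kk 0 s)^2*kk 1 s))) *\<^sub>R E s + (((5*kk 0 s*kk 1 s*c0))) *\<^sub>R X s) s"
    by (rule covD_local[OF _ s]) (use D4 in auto)
  also have "\<dots> = (((-10*kk 1 s*kk 2 s) + (-5*kk 0 s*kk 3 s) + (10*kk 0 s*kk 1 s*(c0)^2) + (10*(kk 0 s)^3*kk 1 s))) *\<^sub>R T s + (((kk 4 s) + (-(kk 2 s*(c0)^2)) + (kk 0 s*(c0)^4) + (-15*kk 0 s*(kk 1 s)^2) + (-10*(kk 0 s)^2*kk 2 s) + (2*(kk 0 s)^3*(c0)^2) + ((kk 0 s)^5))) *\<^sub>R E s + (((-((c0)^5)) + (8*(kk 1 s)^2*c0) + (9*kk 0 s*kk 2 s*c0) + (-2*(kk 0 s)^2*(c0)^3) + (-((kk 0 s)^4*c0)))) *\<^sub>R X s"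
    by (rule frame_step[OF s]) (auto intro!: derivative_eq_intros kk_ds[OF s] kk_d[OF s] simp: algebra_simps eval_nat_numeral)
  finally show ?thesis .
qed

end

context fkc begin

lemma gT_comm: assumes s: "s \<in> I" shows "g (\<gamma> s) (T s) (A *\<^sub>R T s + Bc *\<^sub>R E s + Ec *\<^sub>R X s) = A"
  using comp_T[OF s] g_sym[OF pU[OF s]] by metis

lemma tau_T: assumes s: "s \<in> I" shows "g (\<gamma> s) (tau3 g \<gamma> s) (T s) = (((-10*kk 1 s*kk 2 s) + (-5*kk 0 s*kk 3 s) + (10*kk 0 s*kk 1 s*(c0)^2) + (10*(kk 0 s)^3*kk 1 s)))"
proof -
  have p: "\<gamma> s \<in> U" using pU[OF s] .
  have split: "g (\<gamma> s) (u + v - w) z = g (\<gamma> s) u z + g (\<gamma> s) v z - g (\<gamma> s) w z" for u v w z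
    using g_simps[OF p] by simp
  show ?thesis
    unfolding tau3_def Let_def split curv_zz[OF p] D5[OF s] comp_T[OF s] by simp
qed

lemma tau_X: assumes s: "s \<in> I" shows "g (\<gamma> s) (tau3 g \<gamma> s) (X s) = (((-((c0)^5)) + (8*(kk 1 s)^2*c0) + (9*kk 0 s*kk 2 s*c0) + (-2*(kk 0 s)^2*(c0)^3) + (-((kk 0 s)^4*c0)))) - m0 * ((((c0)^3) + ((kk 0 s)^2*c0))) - m0 * (((-(c0)))) * (((-((c0)^2)) + (-((kk 0 s)^2))))"
proof -
  have p: "\<gamma> s \<in> U" using pU[OF s] .
  have eta: "\<eta> (\<gamma> s) v = g (\<gamma> s) v (X s)" for v using eta_g[OF p] .
  have Df: "frechet_derivative f (at (\<gamma> s)) v = hh (\<gamma> s) * g (\<gamma> s) v (X s)" for v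
    using df_hh[OF p] eta by simp
  have fc: "f (\<gamma> s) = c0" using c_const[OF s] .
  have m: "hh (\<gamma> s) = m0 - c0^2" using m_const[OF s] fc by simp
  have TX: "g (\<gamma> s) (T s) (X s) = 0" using TX0[OF s] .
  have TT1: "g (\<gamma> s) (T s) (T s) = 1" using fr(11)[OF s] .
  have D1': "covD g \<gamma> T s = (covD g \<gamma> ^^ 1) T s" by simp
  have split: "g (\<gamma> s) (u + v - w) z = g (\<gamma> s) u z + g (\<gamma> s) v z - g (\<gamma> s) w z" for u v w z
    using g_simps[OF p] by simp
  have c1: "g (\<gamma> s) (T s) ((covD g \<gamma> ^^ 3) T s) = (((-3*kk 0 s*kk 1 s)))" "g (\<gamma> s) ((covD g \<gamma> ^^ 3) T s) (X s) = ((((c0)^3) + ((kk 0 s)^2*c0)))"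
    "g (\<gamma> s) (T s) ((covD g \<gamma> ^^ 2) T s) = (((-((c0)^2)) + (-((kk 0 s)^2))))" "g (\<gamma> s) ((covD g \<gamma> ^^ 2) T s) (X s) = (0)"
    "g (\<gamma> s) (T s) ((covD g \<gamma> ^^ 1) T s) = (0)" "g (\<gamma> s) ((covD g \<gamma> ^^ 1) T s) (X s) = (((-(c0))))"
    "g (\<gamma> s) ((covD g \<gamma> ^^ 5) T s) (X s) = (((-((c0)^5)) + (8*(kk 1 s)^2*c0) + (9*kk 0 s*kk 2 s*c0) + (-2*(kk 0 s)^2*(c0)^3) + (-((kk 0 s)^4*c0))))"
    unfolding D1[OF s] D2[OF s] D3[OF s] D5[OF s] by (simp_all only: comp_X[OF s] gT_comm[OF s])
  show ?thesis
    unfolding tau3_def Let_def split curv_xi[OF p] D1' eta Df fc m TX TT1 c1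
    by (simp add: algebra_simps power2_eq_square)
qed

lemma not_tri: assumes tri: "\<forall>s\<in>I. tau3 g \<gamma> s = 0" shows False
proof -
  have k1nz: "kk 1 s \<noteq> 0" if "s \<in> I" for s using kap1_nz[OF that] by (simp add: numeral_eq_Suc kk.simps)
  have E1z: "\<forall>s\<in>I. ((-10*kk 1 s*kk 2 s) + (-5*kk 0 s*kk 3 s) + (10*kk 0 s*kk 1 s*(c0)^2) + (10*(kk 0 s)^3*kk 1 s)) = 0"
  proof
    fix s assume s: "s \<in> I"
    show "((-10*kk 1 s*kk 2 s) + (-5*kk 0 s*kk 3 s) + (10*kk 0 s*kk 1 s*(c0)^2) + (10*(kk 0 s)^3*kk 1 s)) = 0" using tau_T[OF s] tri s g_zero1[OF pU[OF s]] by (simp add: algebra_simps)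
  qed
  have E2z: "\<forall>s\<in>I. ((((-((c0)^5)) + (8*(kk 1 s)^2*c0) + (9*kk 0 s*kk 2 s*c0) + (-2*(kk 0 s)^2*(c0)^3) + (-((kk 0 s)^4*c0)))) - m0 * ((((c0)^3) + ((kk 0 s)^2*c0))) - m0 * (((-(c0)))) * (((-((c0)^2)) + (-((kk 0 s)^2))))) = 0"
  proof
    fix s assume s: "s \<in> I"
    show "((((-((c0)^5)) + (8*(kk 1 s)^2*c0) + (9*kk 0 s*kk 2 s*c0) + (-2*(kk 0 s)^2*(c0)^3) + (-((kk 0 s)^4*c0)))) - m0 * ((((c0)^3) + ((kk 0 s)^2*c0))) - m0 * (((-(c0)))) * (((-((c0)^2)) + (-((kk 0 s)^2))))) = 0" using tau_X[OF s] tri s g_zero1[OF pU[OF s]] by simp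
  qed
  have P2z: "\<forall>s\<in>I. ((-2*(c0)^2*m0) + (-1*(c0)^4) + (8*(kk 1 s)^2) + (9*kk 0 s*kk 2 s) + (-2*(kk 0 s)^2*m0) + (-2*(kk 0 s)^2*(c0)^2) + (-1*(kk 0 s)^4)) = 0"
  proof
    fix s assume s: "s \<in> I"
    have "c0 * ((-2*(c0)^2*m0) + (-1*(c0)^4) + (8*(kk 1 s)^2) + (9*kk 0 s*kk 2 s) + (-2*(kk 0 s)^2*m0) + (-2*(kk 0 s)^2*(c0)^2) + (-1*(kk 0 s)^4)) = ((((-((c0)^5)) + (8*(kk 1 s)^2*c0) + (9*kk 0 s*kk 2 s*c0) + (-2*(kk 0 s)^2*(c0)^3) + (-((kk 0 s)^4*c0)))) - m0 * ((((c0)^3) + ((kk 0 s)^2*c0))) - m0 * (((-(c0)))) * (((-((c0)^2)) + (-((kk 0 s)^2)))))" by (simp add: algebra_simps eval_nat_numeral)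
    then show "((-2*(c0)^2*m0) + (-1*(c0)^4) + (8*(kk 1 s)^2) + (9*kk 0 s*kk 2 s) + (-2*(kk 0 s)^2*m0) + (-2*(kk 0 s)^2*(c0)^2) + (-1*(kk 0 s)^4)) = 0" using E2z s c0_nz by simp
  qed
  have dP2z: "\<forall>s\<in>I. ((25*kk 1 s*kk 2 s) + (9*kk 0 s*kk 3 s) + (-4*kk 0 s*kk 1 s*m0) + (-4*kk 0 s*kk 1 s*(c0)^2) + (-4*(kk 0 s)^3*kk 1 s)) = 0"
  proof
    fix s assume s: "s \<in> I"
    have "((\<lambda>s. ((-2*(c0)^2*m0) + (-1*(c0)^4) + (8*(kk 1 s)^2) + (9*kk 0 s*kk 2 s) + (-2*(kk 0 s)^2*m0) + (-2*(kk 0 s)^2*(c0)^2) + (-1*(kk 0 s)^4))) has_real_derivative ((25*kk 1 s*kk 2 s) + (9*kk 0 s*kk 3 s) + (-4*kk 0 s*kk 1 s*m0) + (-4*kk 0 s*kk 1 s*(c0)^2) + (-4*(kk 0 s)^3*kk 1 s))) (at s)"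
      by (auto intro!: derivative_eq_intros kk_ds[OF s] kk_d[OF s] simp: algebra_simps eval_nat_numeral)
    then show "((25*kk 1 s*kk 2 s) + (9*kk 0 s*kk 3 s) + (-4*kk 0 s*kk 1 s*m0) + (-4*kk 0 s*kk 1 s*(c0)^2) + (-4*(kk 0 s)^3*kk 1 s)) = 0" by (rule zero_deriv[OF I_open s, rotated]) (use P2z in auto)
  qed
  have Qz: "\<forall>s\<in>I. ((7*kk 2 s) + (-4*kk 0 s*m0) + (14*kk 0 s*(c0)^2) + (14*(kk 0 s)^3)) = 0"
  proof
    fix s assume s: "s \<in> I"
    have eq: "5 * ((25*kk 1 s*kk 2 s) + (9*kk 0 s*kk 3 s) + (-4*kk 0 s*kk 1 s*m0) + (-4*kk 0 s*kk 1 s*(c0)^2) + (-4*(kk 0 s)^3*kk 1 s)) + 9 * ((-10*kk 1 s*kk 2 s) + (-5*kk 0 s*kk 3 s) + (10*kk 0 s*kk 1 s*(c0)^2) + (10*(kk 0 s)^3*kk 1 s)) = 5 * kk 1 s * ((7*kk 2 s) + (-4*kk 0 s*m0) + (14*kk 0 s*(c0)^2) + (14*(kk 0 s)^3))" by (simp add: algebra_simps eval_nat_numeral)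
    have a: "((25*kk 1 s*kk 2 s) + (9*kk 0 s*kk 3 s) + (-4*kk 0 s*kk 1 s*m0) + (-4*kk 0 s*kk 1 s*(c0)^2) + (-4*(kk 0 s)^3*kk 1 s)) = 0" using dP2z s by blast
    have b: "((-10*kk 1 s*kk 2 s) + (-5*kk 0 s*kk 3 s) + (10*kk 0 s*kk 1 s*(c0)^2) + (10*(kk 0 s)^3*kk 1 s)) = 0" using E1z s by blast
    have "5 * kk 1 s * ((7*kk 2 s) + (-4*kk 0 s*m0) + (14*kk 0 s*(c0)^2) + (14*(kk 0 s)^3)) = 0" using eq unfolding a b by simp
    then have "kk 1 s * ((7*kk 2 s) + (-4*kk 0 s*m0) + (14*kk 0 s*(c0)^2) + (14*(kk 0 s)^3)) = 0" by simp
    then show "((7*kk 2 s) + (-4*kk 0 s*m0) + (14*kk 0 s*(c0)^2) + (14*(kk 0 s)^3)) = 0" using k1nz[OF s] by simp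
  qed
  have Rz: "\<forall>s\<in>I. ((-14*(c0)^2*m0) + (-7*(c0)^4) + (56*(kk 1 s)^2) + (22*(kk 0 s)^2*m0) + (-140*(kk 0 s)^2*(c0)^2) + (-133*(kk 0 s)^4)) = 0"
  proof
    fix s assume s: "s \<in> I"
    have eq: "((-14*(c0)^2*m0) + (-7*(c0)^4) + (56*(kk 1 s)^2) + (22*(kk 0 s)^2*m0) + (-140*(kk 0 s)^2*(c0)^2) + (-133*(kk 0 s)^4)) = 7 * ((-2*(c0)^2*m0) + (-1*(c0)^4) + (8*(kk 1 s)^2) + (9*kk 0 s*kk 2 s) + (-2*(kk 0 s)^2*m0) + (-2*(kk 0 s)^2*(c0)^2) + (-1*(kk 0 s)^4)) - 9 * kk 0 s * ((7*kk 2 s) + (-4*kk 0 s*m0) + (14*kk 0 s*(c0)^2) + (14*(kk 0 s)^3))" by (simp add: algebra_simps eval_nat_numeral)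
    have a: "((-2*(c0)^2*m0) + (-1*(c0)^4) + (8*(kk 1 s)^2) + (9*kk 0 s*kk 2 s) + (-2*(kk 0 s)^2*m0) + (-2*(kk 0 s)^2*(c0)^2) + (-1*(kk 0 s)^4)) = 0" using P2z s by blast
    have b: "((7*kk 2 s) + (-4*kk 0 s*m0) + (14*kk 0 s*(c0)^2) + (14*(kk 0 s)^3)) = 0" using Qz s by blast
    show "((-14*(c0)^2*m0) + (-7*(c0)^4) + (56*(kk 1 s)^2) + (22*(kk 0 s)^2*m0) + (-140*(kk 0 s)^2*(c0)^2) + (-133*(kk 0 s)^4)) = 0" using eq unfolding a b by simp
  qed
  have dRz: "\<forall>s\<in>I. ((112*kk 1 s*kk 2 s) + (44*kk 0 s*kk 1 s*m0) + (-280*kk 0 s*kk 1 s*(c0)^2) + (-532*(kk 0 s)^3*kk 1 s)) = 0"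
  proof
    fix s assume s: "s \<in> I"
    have "((\<lambda>s. ((-14*(c0)^2*m0) + (-7*(c0)^4) + (56*(kk 1 s)^2) + (22*(kk 0 s)^2*m0) + (-140*(kk 0 s)^2*(c0)^2) + (-133*(kk 0 s)^4))) has_real_derivative ((112*kk 1 s*kk 2 s) + (44*kk 0 s*kk 1 s*m0) + (-280*kk 0 s*kk 1 s*(c0)^2) + (-532*(kk 0 s)^3*kk 1 s))) (at s)"
      by (auto intro!: derivative_eq_intros kk_ds[OF s] kk_d[OF s] simp: algebra_simps eval_nat_numeral)
    then show "((112*kk 1 s*kk 2 s) + (44*kk 0 s*kk 1 s*m0) + (-280*kk 0 s*kk 1 s*(c0)^2) + (-532*(kk 0 s)^3*kk 1 s)) = 0" by (rule zero_deriv[OF I_open s, rotated]) (use Rz in auto)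
  qed
  have Wz: "\<forall>s\<in>I. ((-3*kk 0 s*m0) + (14*kk 0 s*(c0)^2) + (21*(kk 0 s)^3)) = 0"
  proof
    fix s assume s: "s \<in> I"
    have eq: "36 * kk 1 s * ((-3*kk 0 s*m0) + (14*kk 0 s*(c0)^2) + (21*(kk 0 s)^3)) = 16 * kk 1 s * ((7*kk 2 s) + (-4*kk 0 s*m0) + (14*kk 0 s*(c0)^2) + (14*(kk 0 s)^3)) - ((112*kk 1 s*kk 2 s) + (44*kk 0 s*kk 1 s*m0) + (-280*kk 0 s*kk 1 s*(c0)^2) + (-532*(kk 0 s)^3*kk 1 s))" by (simp add: algebra_simps eval_nat_numeral)
    have a: "((7*kk 2 s) + (-4*kk 0 s*m0) + (14*kk 0 s*(c0)^2) + (14*(kk 0 s)^3)) = 0" using Qz s by blast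
    have b: "((112*kk 1 s*kk 2 s) + (44*kk 0 s*kk 1 s*m0) + (-280*kk 0 s*kk 1 s*(c0)^2) + (-532*(kk 0 s)^3*kk 1 s)) = 0" using dRz s by blast
    have "36 * kk 1 s * ((-3*kk 0 s*m0) + (14*kk 0 s*(c0)^2) + (21*(kk 0 s)^3)) = 0" using eq unfolding a b by simp
    then have "kk 1 s * ((-3*kk 0 s*m0) + (14*kk 0 s*(c0)^2) + (21*(kk 0 s)^3)) = 0" by simp
    then show "((-3*kk 0 s*m0) + (14*kk 0 s*(c0)^2) + (21*(kk 0 s)^3)) = 0" using k1nz[OF s] by simp
  qed
  have dWz: "\<forall>s\<in>I. ((-3*kk 1 s*m0) + (14*kk 1 s*(c0)^2) + (63*(kk 0 s)^2*kk 1 s)) = 0"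
  proof
    fix s assume s: "s \<in> I"
    have "((\<lambda>s. ((-3*kk 0 s*m0) + (14*kk 0 s*(c0)^2) + (21*(kk 0 s)^3))) has_real_derivative ((-3*kk 1 s*m0) + (14*kk 1 s*(c0)^2) + (63*(kk 0 s)^2*kk 1 s))) (at s)"
      by (auto intro!: derivative_eq_intros kk_ds[OF s] kk_d[OF s] simp: algebra_simps eval_nat_numeral)
    then show "((-3*kk 1 s*m0) + (14*kk 1 s*(c0)^2) + (63*(kk 0 s)^2*kk 1 s)) = 0" by (rule zero_deriv[OF I_open s, rotated]) (use Wz in auto)
  qed
  have Vz: "\<forall>s\<in>I. ((-3*m0) + (14*(c0)^2) + (63*(kk 0 s)^2)) = 0"
  proof
    fix s assume s: "s \<in> I"
    have eq: "((-3*kk 1 s*m0) + (14*kk 1 s*(c0)^2) + (63*(kk 0 s)^2*kk 1 s)) = kk 1 s * ((-3*m0) + (14*(c0)^2) + (63*(kk 0 s)^2))" by (simp add: algebra_simps eval_nat_numeral)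
    have a: "((-3*kk 1 s*m0) + (14*kk 1 s*(c0)^2) + (63*(kk 0 s)^2*kk 1 s)) = 0" using dWz s by blast
    have "kk 1 s * ((-3*m0) + (14*(c0)^2) + (63*(kk 0 s)^2)) = 0" using eq unfolding a by simp
    then show "((-3*m0) + (14*(c0)^2) + (63*(kk 0 s)^2)) = 0" using k1nz[OF s] by simp
  qed
  have k0z: "\<forall>s\<in>I. kk 0 s = 0"
  proof
    fix s assume s: "s \<in> I"
    have eq: "((-3*kk 0 s*m0) + (14*kk 0 s*(c0)^2) + (21*(kk 0 s)^3)) - kk 0 s * ((-3*m0) + (14*(c0)^2) + (63*(kk 0 s)^2)) = -42 * (kk 0 s)^3" by (simp add: algebra_simps eval_nat_numeral)
    have a: "((-3*kk 0 s*m0) + (14*kk 0 s*(c0)^2) + (21*(kk 0 s)^3)) = 0" using Wz s by blast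
    have b: "((-3*m0) + (14*(c0)^2) + (63*(kk 0 s)^2)) = 0" using Vz s by blast
    have "-42 * (kk 0 s)^3 = 0" using eq unfolding a b by simp
    then have "(kk 0 s)^3 = 0" by simp
    then show "kk 0 s = 0" by simp
  qed
  have "kk 1 s0 = 0"
  proof -
    have "(kk 0 has_real_derivative kk 1 s0) (at s0)" by (rule kk_ds(1)[OF s0])
    then show ?thesis by (rule zero_deriv[OF I_open s0 k0z])
  qed
  then show False using k1nz[OF s0] by simp
qed

end

theorem theorem11:
  fixes U :: "pt set" and g :: "pt \<Rightarrow> pt \<Rightarrow> pt \<Rightarrow> real" and \<phi> :: "pt \<Rightarrow> pt \<Rightarrow> pt"
    and \<xi> :: "pt \<Rightarrow> pt" and \<eta> :: "pt \<Rightarrow> pt \<Rightarrow> real" and f :: "pt \<Rightarrow> real"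
    and I :: "real set" and \<gamma> :: "real \<Rightarrow> pt"
  assumes "f_kenmotsu U g \<phi> \<xi> \<eta> f"
    and "frenet_curve U g I \<gamma>"
    and "legendre_curve \<eta> I \<gamma>"
  shows "\<not> triharmonic g I \<gamma>"
proof
  assume tri: "triharmonic g I \<gamma>"
  have FK: "f_kenmotsu U g \<phi> \<xi> \<eta> f" by fact
  have RM: "riemannian_metric U g" using FK unfolding f_kenmotsu_def by blast
  have fc: "open I \<and> is_interval I \<and> I \<noteq> {} \<and> (\<forall>s\<in>I. \<gamma> s \<in> U) \<and> vf_smooth I \<gamma> \<and>
       (\<forall>s\<in>I. g (\<gamma> s) (velocity \<gamma> s) (velocity \<gamma> s) = 1) \<and>
       (\<exists>N B k1 k2. vf_smooth I N \<and> vf_smooth I B \<and>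
          (\<forall>s\<in>I. g (\<gamma> s) (N s) (N s) = 1 \<and> g (\<gamma> s) (B s) (B s) = 1 \<and>
                 g (\<gamma> s) (velocity \<gamma> s) (N s) = 0 \<and> g (\<gamma> s) (velocity \<gamma> s) (B s) = 0 \<and> g (\<gamma> s) (N s) (B s) = 0 \<and>
                 k1 s > 0 \<and> k2 s > 0 \<and>
                 covD g \<gamma> (velocity \<gamma>) s = k1 s *\<^sub>R N s \<and>
                 covD g \<gamma> N s = - k1 s *\<^sub>R velocity \<gamma> s + k2 s *\<^sub>R B s \<and>
                 covD g \<gamma> B s = - k2 s *\<^sub>R N s))"
    using assms(2) unfolding frenet_curve_def Let_def by simp
  then obtain N B k1 k2 where NB: "vf_smooth I N" "vf_smooth I B"
    "\<forall>s\<in>I. g (\<gamma> s) (N s) (N s) = 1 \<and> g (\<gamma> s) (B s) (B s) = 1 \<and>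
                 g (\<gamma> s) (velocity \<gamma> s) (N s) = 0 \<and> g (\<gamma> s) (velocity \<gamma> s) (B s) = 0 \<and> g (\<gamma> s) (N s) (B s) = 0 \<and>
                 k1 s > 0 \<and> k2 s > 0 \<and>
                 covD g \<gamma> (velocity \<gamma>) s = k1 s *\<^sub>R N s \<and>
                 covD g \<gamma> N s = - k1 s *\<^sub>R velocity \<gamma> s + k2 s *\<^sub>R B s \<and>
                 covD g \<gamma> B s = - k2 s *\<^sub>R N s"
    by blast
  interpret fkc U g \<phi> \<xi> \<eta> f I \<gamma> N B k1 k2
  proof (unfold_locales)
    show "riemannian_metric U g" by (rule RM)
    show "f_kenmotsu U g \<phi> \<xi> \<eta> f" by (rule FK)
    show "open I" "is_interval I" "I \<noteq> {}" "\<forall>s\<in>I. \<gamma> s \<in> U" using fc by auto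
    show "\<forall>i. C_inf_on I (\<lambda>s. \<gamma> s $ i)" using fc unfolding vf_smooth_def by auto
    show "\<forall>s\<in>I. g (\<gamma> s) (velocity \<gamma> s) (velocity \<gamma> s) = 1" using fc by auto
    show "\<forall>i. C_inf_on I (\<lambda>s. N s $ i)" "\<forall>i. C_inf_on I (\<lambda>s. B s $ i)"
      using NB unfolding vf_smooth_def by auto
    show "\<forall>s\<in>I. g (\<gamma> s) (N s) (N s) = 1 \<and> g (\<gamma> s) (B s) (B s) = 1 \<and>
                 g (\<gamma> s) (velocity \<gamma> s) (N s) = 0 \<and> g (\<gamma> s) (velocity \<gamma> s) (B s) = 0 \<and> g (\<gamma> s) (N s) (B s) = 0 \<and>
                 k1 s > 0 \<and> k2 s > 0 \<and>
                 covD g \<gamma> (velocity \<gamma>) s = k1 s *\<^sub>R N s \<and>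
                 covD g \<gamma> N s = - k1 s *\<^sub>R velocity \<gamma> s + k2 s *\<^sub>R B s \<and>
                 covD g \<gamma> B s = - k2 s *\<^sub>R N s" using NB(3) .
    show "\<forall>s\<in>I. \<eta> (\<gamma> s) (velocity \<gamma> s) = 0" using assms(3) unfolding legendre_curve_def .
  qed
  show False using not_tri tri unfolding triharmonic_def by blast
qed

end
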